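(* Let $H$ be a quasitriangular Hopf algebra with universal R-matrix $\mathcal R=\mathcal R^{[1]}\otimes\mathcal R^{[2]}\in H\otimes H$, and let $H^*$ be a Hopf algebra in nondegenerate duality with $H$ (e.g. $H$ finite-dimensional). Let $D(H)$, the covariant algebra $\underline{H^*}$, the actions and the map $Q$ be as defined in the context. Then $Q:\underline{H^*}\to H$ is a map of covariant algebras: it is an algebra homomorphism from $\underline{H^*}$ to $H$, and for all $h\in H$, $a,b\in H^*$, $$Q\big((h\otimes a)\triangleright b\big)=(h\otimes a)\triangleright Q(b),$$ where on the left the action of $D(H)$ on $\underline{H^*}$ is used and on the right the action of $D(H)$ on $H$ is used.
   Context: Notation: $\Delta h=h_{(1)}\otimes h_{(2)}$ (Sweedler notation, with further indices for iterated coproducts), $S$ the antipode, $\langle\ ,\ \rangle$ the pairing between $H$ and $H^*$. For $x,y\in H^*$ write $\mathcal R(x, y)=\langle x,\mathcal R^{[1]}\rangle\langle y,\mathcal R^{[2]}\rangle$. The quantum double $D(H)=H\bowtie H^{*\mathrm{op}}$ is the Hopf algebra built on $H\otimes H^*$ with the tensor product coproduct, the Hopf structure of $H$ and of $H^{*\mathrm{op}}$ (the opposite product of $H^*$) on the two factors, and product $$(h\otimes a)(g\otimes b)=hg_{(2)}\otimes b\,a_{(2)}\,\langle g_{(1)},a_{(1)}\rangle\langle Sg_{(3)},a_{(3)}\rangle,\qquad h,g\in H,\ a,b\in H^*,$$ where $b\,a_{(2)}$ is the product in $H^*$. $D(H)$ acts on the algebra $H$ by $(h\otimes a)\triangleright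 \phi=\langle \phi_{(1)},a\rangle\, h_{(1)}\phi_{(2)}Sh_{(2)}$ for $\phi\in H$ (coproduct of $H$). The algebra $\underline{H^*}$ is the vector space $H^*$ with the product $a\,\underline{\cdot}\,b=a_{(2)}b_{(2)}\,\mathcal R\big((Sa_{(1)})a_{(3)}, Sb_{(1)}\big)$, and $D(H)$ acts on it by $$(h\otimes a)\triangleright b=b_{(3)}\,\langle h,(Sb_{(2)})b_{(4)}\rangle\,\mathcal R(a_{(1)},b_{(1)})\,\mathcal R(b_{(5)},a_{(2)}).$$ Let $\mathcal Q=\mathcal R_{21}\mathcal R=\mathcal Q^{[1]}\otimes\mathcal Q^{[2]}\in H\otimes H$ and define $Q:H^*\to H$ by $Q(a)=\langle a,\mathcal Q^{[1]}\rangle\mathcal Q^{[2]}$. A covariant system means a Hopf algebra acting on an algebra $A$ with $h\triangleright(ab)=(h_{(1)}\triangleright a)(h_{(2)}\triangleright b)$ and $h\triangleright 1=\epsilon(h)1$. *)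

theory Defs
  imports Complex_Main
begin

text \<open>Elements of tensor powers are represented by finite
  lists of simple tensors (their sum); two such lists denote the same tensor iff all
  multilinear forms agree on them (intrinsic equality in the tensor product).\<close>

record ('k, 'v) hopf =
  hscl :: "'k \<Rightarrow> 'v \<Rightarrow> 'v"
  hmul :: "'v \<Rightarrow> 'v \<Rightarrow> 'v"
  hone :: "'v"
  hcop :: "'v \<Rightarrow> ('v \<times> 'v) list"
  heps :: "'v \<Rightarrow> 'k"
  hant :: "'v \<Rightarrow> 'v"

definition lin_map ::
  "('k::field \<Rightarrow> 'u::ab_group_add \<Rightarrow> 'u) \<Rightarrow> ('k \<Rightarrow> 'w::ab_group_add \<Rightarrow> 'w) \<Rightarrow> ('u \<Rightarrow> 'w) \<Rightarrow> bool" where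
  "lin_map s t f \<longleftrightarrow> (\<forall>x y. f (x + y) = f x + f y) \<and> (\<forall>c x. f (s c x) = t c (f x))"

definition bilin_map ::
  "('k::field \<Rightarrow> 'u::ab_group_add \<Rightarrow> 'u) \<Rightarrow> ('k \<Rightarrow> 'v::ab_group_add \<Rightarrow> 'v)
    \<Rightarrow> ('k \<Rightarrow> 'w::ab_group_add \<Rightarrow> 'w) \<Rightarrow> ('u \<Rightarrow> 'v \<Rightarrow> 'w) \<Rightarrow> bool" where
  "bilin_map s1 s2 t f \<longleftrightarrow> (\<forall>y. lin_map s1 t (\<lambda>x. f x y)) \<and> (\<forall>x. lin_map s2 t (f x))"

definition trilin_map ::
  "('k::field \<Rightarrow> 'u::ab_group_add \<Rightarrow> 'u) \<Rightarrow> ('k \<Rightarrow> 'w::ab_group_add \<Rightarrow> 'w) \<Rightarrow> ('u \<Rightarrow> 'u \<Rightarrow> 'u \<Rightarrow> 'w) \<Rightarrow> bool" where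
  "trilin_map s t f \<longleftrightarrow> (\<forall>y z. lin_map s t (\<lambda>x. f x y z)) \<and> (\<forall>x z. lin_map s t (\<lambda>y. f x y z))
      \<and> (\<forall>x y. lin_map s t (f x y))"

definition teq2 :: "('k::field \<Rightarrow> 'v::ab_group_add \<Rightarrow> 'v) \<Rightarrow> ('v \<times> 'v) list \<Rightarrow> ('v \<times> 'v) list \<Rightarrow> bool" where
  "teq2 s t u \<longleftrightarrow> (\<forall>f :: 'v \<Rightarrow> 'v \<Rightarrow> 'k. bilin_map s s (*) f \<longrightarrow>
      sum_list (map (\<lambda>(x, y). f x y) t) = sum_list (map (\<lambda>(x, y). f x y) u))"

definition teq3 :: "('k::field \<Rightarrow> 'v::ab_group_add \<Rightarrow> 'v) \<Rightarrow> ('v \<times> 'v \<times> 'v) list \<Rightarrow> ('v \<times> 'v \<times> 'v) list \<Rightarrow> bool" where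
  "teq3 s t u \<longleftrightarrow> (\<forall>f :: 'v \<Rightarrow> 'v \<Rightarrow> 'v \<Rightarrow> 'k. trilin_map s (*) f \<longrightarrow>
      sum_list (map (\<lambda>(x, y, z). f x y z) t) = sum_list (map (\<lambda>(x, y, z). f x y z) u))"

definition tmul2 :: "('v \<Rightarrow> 'v \<Rightarrow> 'v) \<Rightarrow> ('v \<times> 'v) list \<Rightarrow> ('v \<times> 'v) list \<Rightarrow> ('v \<times> 'v) list" where
  "tmul2 m t u = [(m x x', m y y'). (x, y) \<leftarrow> t, (x', y') \<leftarrow> u]"

definition tmul3 :: "('v \<Rightarrow> 'v \<Rightarrow> 'v) \<Rightarrow> ('v \<times> 'v \<times> 'v) list \<Rightarrow> ('v \<times> 'v \<times> 'v) list \<Rightarrow> ('v \<times> 'v \<times> 'v) list" where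
  "tmul3 m t u = [(m x x', m y y', m z z'). (x, y, z) \<leftarrow> t, (x', y', z') \<leftarrow> u]"

definition cop_l :: "('v \<Rightarrow> ('v \<times> 'v) list) \<Rightarrow> ('v \<times> 'v) list \<Rightarrow> ('v \<times> 'v \<times> 'v) list" where
  "cop_l d t = [(p, q, y). (x, y) \<leftarrow> t, (p, q) \<leftarrow> d x]"

definition cop_r :: "('v \<Rightarrow> ('v \<times> 'v) list) \<Rightarrow> ('v \<times> 'v) list \<Rightarrow> ('v \<times> 'v \<times> 'v) list" where
  "cop_r d t = [(x, p, q). (x, y) \<leftarrow> t, (p, q) \<leftarrow> d y]"

definition hopf_algebra :: "('k::field, 'v::ab_group_add) hopf \<Rightarrow> bool" where
  "hopf_algebra H \<longleftrightarrow>
     vector_space (hscl H)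
   \<and> bilin_map (hscl H) (hscl H) (hscl H) (hmul H)
   \<and> (\<forall>x y z. hmul H (hmul H x y) z = hmul H x (hmul H y z))
   \<and> (\<forall>x. hmul H (hone H) x = x \<and> hmul H x (hone H) = x)
   \<and> (\<forall>x y. teq2 (hscl H) (hcop H (x + y)) (hcop H x @ hcop H y))
   \<and> (\<forall>c x. teq2 (hscl H) (hcop H (hscl H c x)) [(hscl H c p, q). (p, q) \<leftarrow> hcop H x])
   \<and> (\<forall>x. teq3 (hscl H) (cop_l (hcop H) (hcop H x)) (cop_r (hcop H) (hcop H x)))
   \<and> lin_map (hscl H) (*) (heps H)
   \<and> (\<forall>x. sum_list [hscl H (heps H p) q. (p, q) \<leftarrow> hcop H x] = x
         \<and> sum_list [hscl H (heps H q) p. (p, q) \<leftarrow> hcop H x] = x)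
   \<and> (\<forall>x y. teq2 (hscl H) (hcop H (hmul H x y)) (tmul2 (hmul H) (hcop H x) (hcop H y)))
   \<and> teq2 (hscl H) (hcop H (hone H)) [(hone H, hone H)]
   \<and> (\<forall>x y. heps H (hmul H x y) = heps H x * heps H y)
   \<and> heps H (hone H) = 1
   \<and> lin_map (hscl H) (hscl H) (hant H)
   \<and> (\<forall>x. sum_list [hmul H (hant H p) q. (p, q) \<leftarrow> hcop H x] = hscl H (heps H x) (hone H)
         \<and> sum_list [hmul H p (hant H q). (p, q) \<leftarrow> hcop H x] = hscl H (heps H x) (hone H))"

definition hopf_pairing :: "('k::field, 'h::ab_group_add) hopf \<Rightarrow> ('k, 'a::ab_group_add) hopf
     \<Rightarrow> ('h \<Rightarrow> 'a \<Rightarrow> 'k) \<Rightarrow> bool" where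
  "hopf_pairing H A pr \<longleftrightarrow>
     bilin_map (hscl H) (hscl A) (*) pr
   \<and> (\<forall>h. (\<forall>a. pr h a = 0) \<longrightarrow> h = 0)
   \<and> (\<forall>a. (\<forall>h. pr h a = 0) \<longrightarrow> a = 0)
   \<and> (\<forall>g h a. pr (hmul H g h) a = sum_list [pr g x * pr h y. (x, y) \<leftarrow> hcop A a])
   \<and> (\<forall>h a b. pr h (hmul A a b) = sum_list [pr x a * pr y b. (x, y) \<leftarrow> hcop H h])
   \<and> (\<forall>a. pr (hone H) a = heps A a)
   \<and> (\<forall>h. pr h (hone A) = heps H h)
   \<and> (\<forall>h a. pr (hant H h) a = pr h (hant A a))"

definition quasitriangular :: "('k::field, 'h::ab_group_add) hopf \<Rightarrow> ('h \<times> 'h) list \<Rightarrow> bool" where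
  "quasitriangular H R \<longleftrightarrow>
     (\<exists>Ri. teq2 (hscl H) (tmul2 (hmul H) R Ri) [(hone H, hone H)]
          \<and> teq2 (hscl H) (tmul2 (hmul H) Ri R) [(hone H, hone H)])
   \<and> (\<forall>h. teq2 (hscl H) (tmul2 (hmul H) (map prod.swap (hcop H h)) R) (tmul2 (hmul H) R (hcop H h)))
   \<and> teq3 (hscl H) (cop_l (hcop H) R)
        (tmul3 (hmul H) [(x, hone H, y). (x, y) \<leftarrow> R] [(hone H, x, y). (x, y) \<leftarrow> R])
   \<and> teq3 (hscl H) (cop_r (hcop H) R)
        (tmul3 (hmul H) [(x, hone H, y). (x, y) \<leftarrow> R] [(x, y, hone H). (x, y) \<leftarrow> R])"

definition Rform :: "('h \<Rightarrow> 'a \<Rightarrow> 'k::field) \<Rightarrow> ('h \<times> 'h) list \<Rightarrow> 'a \<Rightarrow> 'a \<Rightarrow> 'k" where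
  "Rform pr R x y = sum_list [pr r1 x * pr r2 y. (r1, r2) \<leftarrow> R]"

definition Qmap :: "('k::field, 'h::ab_group_add) hopf \<Rightarrow> ('h \<Rightarrow> 'a \<Rightarrow> 'k) \<Rightarrow> ('h \<times> 'h) list \<Rightarrow> 'a \<Rightarrow> 'h" where
  "Qmap H pr R a = sum_list [hscl H (pr q1 a) q2. (q1, q2) \<leftarrow> tmul2 (hmul H) (map prod.swap R) R]"

definition bmul :: "('k::field, 'a::ab_group_add) hopf \<Rightarrow> ('h \<Rightarrow> 'a \<Rightarrow> 'k) \<Rightarrow> ('h \<times> 'h) list \<Rightarrow> 'a \<Rightarrow> 'a \<Rightarrow> 'a" where
  "bmul A pr R a b = sum_list
     [hscl A (Rform pr R (hmul A (hant A a1) a3) (hant A b1)) (hmul A a2 b2).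
        (a1, y) \<leftarrow> hcop A a, (a2, a3) \<leftarrow> hcop A y, (b1, b2) \<leftarrow> hcop A b]"

definition actH :: "('k::field, 'h::ab_group_add) hopf \<Rightarrow> ('h \<Rightarrow> 'a \<Rightarrow> 'k) \<Rightarrow> 'h \<Rightarrow> 'a \<Rightarrow> 'h \<Rightarrow> 'h" where
  "actH H pr h a \<phi> = sum_list
     [hscl H (pr p1 a) (hmul H (hmul H h1 p2) (hant H h2)). (p1, p2) \<leftarrow> hcop H \<phi>, (h1, h2) \<leftarrow> hcop H h]"

definition actA :: "('k::field, 'a::ab_group_add) hopf \<Rightarrow> ('h \<Rightarrow> 'a \<Rightarrow> 'k) \<Rightarrow> ('h \<times> 'h) list
     \<Rightarrow> 'h \<Rightarrow> 'a \<Rightarrow> 'a \<Rightarrow> 'a" where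
  "actA A pr R h a b = sum_list
     [hscl A (pr h (hmul A (hant A b2) b4) * Rform pr R a1 b1 * Rform pr R b5 a2) b3.
        (b1, y1) \<leftarrow> hcop A b, (b2, y2) \<leftarrow> hcop A y1, (b3, y3) \<leftarrow> hcop A y2, (b4, b5) \<leftarrow> hcop A y3,
        (a1, a2) \<leftarrow> hcop A a]"

end

theory Submission
  imports Defs
begin

definition SL :: "('x \<times> 'y) list \<Rightarrow> ('x \<Rightarrow> 'y \<Rightarrow> 'k::comm_monoid_add) \<Rightarrow> 'k" where
  "SL L F = sum_list (map (\<lambda>(x,y). F x y) L)"

definition SL3 :: "('x \<times> 'y \<times> 'z) list \<Rightarrow> ('x \<Rightarrow> 'y \<Rightarrow> 'z \<Rightarrow> 'k::comm_monoid_add) \<Rightarrow> 'k" where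
  "SL3 L F = sum_list (map (\<lambda>(x,y,z). F x y z) L)"

lemma SL_Nil[simp]: "SL [] F = 0" by (simp add: SL_def)
lemma SL_Cons[simp]: "SL ((x,y)#L) F = F x y + SL L F" by (simp add: SL_def)
lemma SL_append[simp]: "SL (L@M) F = SL L F + SL M F" by (simp add: SL_def)
lemma SL3_Nil[simp]: "SL3 [] F = 0" by (simp add: SL3_def)
lemma SL3_Cons[simp]: "SL3 ((x,y,z)#L) F = F x y z + SL3 L F" by (simp add: SL3_def)
lemma SL3_append[simp]: "SL3 (L@M) F = SL3 L F + SL3 M F" by (simp add: SL3_def)

lemma SL_add: "SL L (\<lambda>x y. F x y + G x y) = SL L F + SL L G"
  by (induction L) (auto simp: algebra_simps)
lemma SL_0[simp]: "SL L (\<lambda>x y. 0) = 0"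
  by (induction L) auto
lemma SL_mult_left: "(c::'k::comm_ring) * SL L F = SL L (\<lambda>x y. c * F x y)"
  by (induction L) (auto simp: algebra_simps)
lemma SL_mult_right: "SL L F * (c::'k::comm_ring) = SL L (\<lambda>x y. F x y * c)"
  by (induction L) (auto simp: algebra_simps)
lemma SL_swap: "SL L (\<lambda>x y. SL M (F x y)) = SL M (\<lambda>u v. SL L (\<lambda>x y. F x y u v))"
  by (induction L) (auto simp: SL_add)
lemma SL_swap3: "SL L (\<lambda>a b. SL M (\<lambda>c d. SL N (F a b c d))) = SL M (\<lambda>c d. SL N (\<lambda>e f. SL L (\<lambda>a b. F a b c d e f)))"
  by (simp add: SL_swap[of L])
lemma SL_cong: "(\<And>x y. (x,y) \<in> set L \<Longrightarrow> F x y = G x y) \<Longrightarrow> SL L F = SL L G"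
  by (induction L) auto
lemma SL_swap3g: "SL L (\<lambda>a b. SL M (\<lambda>c d. SL (N c d) (F a b c d))) = SL M (\<lambda>c d. SL (N c d) (\<lambda>e f. SL L (\<lambda>a b. F a b c d e f)))"
proof -
  have "SL L (\<lambda>a b. SL M (\<lambda>c d. SL (N c d) (F a b c d))) = SL M (\<lambda>c d. SL L (\<lambda>a b. SL (N c d) (F a b c d)))" by (rule SL_swap)
  also have "\<dots> = SL M (\<lambda>c d. SL (N c d) (\<lambda>e f. SL L (\<lambda>a b. F a b c d e f)))" by (rule SL_cong) (rule SL_swap)
  finally show ?thesis .
qed
lemma SL_rev3: "SL L (\<lambda>a b. SL M (\<lambda>c d. SL N (F a b c d))) = SL N (\<lambda>e f. SL M (\<lambda>c d. SL L (\<lambda>a b. F a b c d e f)))"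
proof -
  have "SL L (\<lambda>a b. SL M (\<lambda>c d. SL N (F a b c d))) = SL M (\<lambda>c d. SL L (\<lambda>a b. SL N (F a b c d)))" by (rule SL_swap)
  also have "\<dots> = SL M (\<lambda>c d. SL N (\<lambda>e f. SL L (\<lambda>a b. F a b c d e f)))" by (rule SL_cong) (rule SL_swap)
  also have "\<dots> = SL N (\<lambda>e f. SL M (\<lambda>c d. SL L (\<lambda>a b. F a b c d e f)))" by (rule SL_swap)
  finally show ?thesis .
qed
lemma SL_map: "SL (map (\<lambda>(x,y). (f x y, g x y)) L) F = SL L (\<lambda>x y. F (f x y) (g x y))"
  by (induction L) auto
lemma SL_swapmap: "SL (map prod.swap L) F = SL L (\<lambda>x y. F y x)"
  by (induction L) auto
lemma SL_comp: "SL [(f x y, g x y). (x,y) \<leftarrow> L] F = SL L (\<lambda>x y. F (f x y) (g x y))"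
  by (induction L) auto
lemma SL_sum_list: "SL L (\<lambda>x y. sum_list (map (G x y) M)) = sum_list (map (\<lambda>i. SL L (\<lambda>x y. G x y i)) M)"
  by (induction M) (auto simp: SL_add)

lemma SL_tmul2: "SL (tmul2 m t u) F = SL t (\<lambda>x y. SL u (\<lambda>x' y'. F (m x x') (m y y')))"
  by (induction t) (auto simp: tmul2_def SL_comp)

lemma SL3_comp: "SL3 [(f x y, g x y, h x y). (x,y) \<leftarrow> L] F = SL L (\<lambda>x y. F (f x y) (g x y) (h x y))"
  by (induction L) auto
lemma SL3_comp3: "SL3 [(f x y z, g x y z, h x y z). (x,y,z) \<leftarrow> L] F = SL3 L (\<lambda>x y z. F (f x y z) (g x y z) (h x y z))"
  by (induction L) auto
lemma SL3_add: "SL3 L (\<lambda>x y z. F x y z + G x y z) = SL3 L F + SL3 L G"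
  by (induction L) (auto simp: algebra_simps)
lemma SL3_cop_l: "SL3 (cop_l d t) F = SL t (\<lambda>x y. SL (d x) (\<lambda>p q. F p q y))"
proof (induction t)
  case Nil then show ?case by (simp add: cop_l_def)
next
  case (Cons a t)
  have e: "\<And>L y. SL3 [(p, q, y). (p, q) \<leftarrow> L] F = SL L (\<lambda>p q. F p q y)"
    subgoal for L y by (induction L) auto done
  from Cons show ?case by (cases a) (simp add: cop_l_def e)
qed
lemma SL3_cop_r: "SL3 (cop_r d t) F = SL t (\<lambda>x y. SL (d y) (\<lambda>p q. F x p q))"
proof (induction t)
  case Nil then show ?case by (simp add: cop_r_def)
next
  case (Cons a t)
  have e: "\<And>L x. SL3 (map (Pair x) L) F = SL L (F x)"
    subgoal for L x by (induction L) auto done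
  from Cons show ?case by (cases a) (simp add: cop_r_def e)
qed
lemma SL3_tmul3: "SL3 (tmul3 m T U) F = SL3 T (\<lambda>x y z. SL3 U (\<lambda>x' y' z'. F (m x x') (m y y') (m z z')))"
proof (induction T)
  case Nil then show ?case by (simp add: tmul3_def)
next
  case (Cons a T)
  then show ?case by (cases a) (simp add: tmul3_def SL3_comp3)
qed

lemma SL_comp_fun: "sum_list (map (F \<circ> (\<lambda>(x,y). g x y)) L) = SL L (\<lambda>x y. F (g x y))"
  by (induction L) auto
lemma SL3_Pair: "SL3 (map (Pair a) L) F = SL L (F a)"
  by (induction L) auto

lemma lin_add: "lin_map s t f \<Longrightarrow> f (x + y) = f x + f y" by (simp add: lin_map_def)
lemma lin_scale: "lin_map s t f \<Longrightarrow> f (s c x) = t c (f x)" by (simp add: lin_map_def)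
lemma lin_zero: "lin_map s t f \<Longrightarrow> f 0 = 0"
  using lin_add[of s t f 0 0] by simp
lemma lin_sum_list: "lin_map s t f \<Longrightarrow> f (sum_list xs) = sum_list (map f xs)"
  by (induction xs) (auto simp: lin_zero lin_add)
lemma lin_SL: "lin_map s t f \<Longrightarrow> f (SL L F) = SL L (\<lambda>x y. f (F x y))"
  by (induction L) (auto simp: lin_zero lin_add)
lemma lin_minus: "lin_map s t f \<Longrightarrow> f (- x) = - f x"
  using lin_add[of s t f x "-x"] lin_zero[of s t f] by (simp add: eq_neg_iff_add_eq_0 add.commute)
lemma lin_diff: "lin_map s t f \<Longrightarrow> f (x - y) = f x - f y"
  using lin_add[of s t f x "-y"] lin_minus[of s t f y] by simp

lemma teq2_SL: "teq2 s L1 L2 \<Longrightarrow> bilin_map s s (*) G \<Longrightarrow> SL L1 G = SL L2 G"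
  unfolding teq2_def SL_def by blast
lemma teq3_SL: "teq3 s L1 L2 \<Longrightarrow> trilin_map s (*) G \<Longrightarrow> SL3 L1 G = SL3 L2 G"
  unfolding teq3_def SL3_def by blast

lemma sum_list_map_case: "sum_list (map F (map (\<lambda>(x,y). g x y) L)) = SL L (\<lambda>x y. F (g x y))"
  by (induction L) auto

locale QT =
  fixes H :: "('k::field, 'h::ab_group_add) hopf"
    and A :: "('k, 'a::ab_group_add) hopf"
    and pr :: "'h \<Rightarrow> 'a \<Rightarrow> 'k"
    and R :: "('h \<times> 'h) list"
  assumes hH: "hopf_algebra H" and hA: "hopf_algebra A"
    and hP: "hopf_pairing H A pr" and hR: "quasitriangular H R"
begin

abbreviation m where "m \<equiv> hmul H"
abbreviation S where "S \<equiv> hant H"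
abbreviation \<epsilon> where "\<epsilon> \<equiv> heps H"
abbreviation \<Delta> where "\<Delta> \<equiv> hcop H"
abbreviation sc where "sc \<equiv> hscl H"
abbreviation e1 where "e1 \<equiv> hone H"
abbreviation mA where "mA \<equiv> hmul A"
abbreviation SA where "SA \<equiv> hant A"
abbreviation \<epsilon>A where "\<epsilon>A \<equiv> heps A"
abbreviation \<Delta>A where "\<Delta>A \<equiv> hcop A"
abbreviation scA where "scA \<equiv> hscl A"
abbreviation e1A where "e1A \<equiv> hone A"

abbreviation linH :: "('h \<Rightarrow> 'k) \<Rightarrow> bool" where "linH F \<equiv> lin_map (hscl H) (*) F"
abbreviation linHH :: "('h \<Rightarrow> 'h) \<Rightarrow> bool" where "linHH f \<equiv> lin_map (hscl H) (hscl H) f"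
abbreviation bil :: "('h \<Rightarrow> 'h \<Rightarrow> 'k) \<Rightarrow> bool" where "bil G \<equiv> bilin_map (hscl H) (hscl H) (*) G"
abbreviation tril :: "('h \<Rightarrow> 'h \<Rightarrow> 'h \<Rightarrow> 'k) \<Rightarrow> bool" where "tril G \<equiv> trilin_map (hscl H) (*) G"
abbreviation linA :: "('a \<Rightarrow> 'k) \<Rightarrow> bool" where "linA F \<equiv> lin_map (hscl A) (*) F"

lemma H_vs: "vector_space sc" using hH unfolding hopf_algebra_def by blast
lemma H_mbil: "bilin_map sc sc sc m" using hH unfolding hopf_algebra_def by blast
lemma H_assoc: "m (m x y) z = m x (m y z)" using hH unfolding hopf_algebra_def by blast
lemma H_oneL[simp]: "m e1 x = x" using hH unfolding hopf_algebra_def by blast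
lemma H_oneR[simp]: "m x e1 = x" using hH unfolding hopf_algebra_def by blast
lemma H_copadd: "teq2 sc (\<Delta> (x+y)) (\<Delta> x @ \<Delta> y)" using hH unfolding hopf_algebra_def by blast
lemma H_copsc: "teq2 sc (\<Delta> (sc c x)) [(sc c p, q). (p, q) \<leftarrow> \<Delta> x]" using hH unfolding hopf_algebra_def by blast
lemma H_coass: "teq3 sc (cop_l \<Delta> (\<Delta> x)) (cop_r \<Delta> (\<Delta> x))" using hH unfolding hopf_algebra_def by blast
lemma H_epslin: "linH \<epsilon>" using hH unfolding hopf_algebra_def by blast
lemma H_cou1: "sum_list [sc (\<epsilon> p) q. (p, q) \<leftarrow> \<Delta> x] = x" using hH unfolding hopf_algebra_def by blast
lemma H_cou2: "sum_list [sc (\<epsilon> q) p. (p, q) \<leftarrow> \<Delta> x] = x" using hH unfolding hopf_algebra_def by blast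
lemma H_copmul: "teq2 sc (\<Delta> (m x y)) (tmul2 m (\<Delta> x) (\<Delta> y))" using hH unfolding hopf_algebra_def by blast
lemma H_copone: "teq2 sc (\<Delta> e1) [(e1, e1)]" using hH unfolding hopf_algebra_def by blast
lemma H_epsmul: "\<epsilon> (m x y) = \<epsilon> x * \<epsilon> y" using hH unfolding hopf_algebra_def by blast
lemma H_epsone[simp]: "\<epsilon> e1 = 1" using hH unfolding hopf_algebra_def by blast
lemma H_Slin: "linHH S" using hH unfolding hopf_algebra_def by blast
lemma H_ant1: "sum_list [m (S p) q. (p, q) \<leftarrow> \<Delta> x] = sc (\<epsilon> x) e1" using hH unfolding hopf_algebra_def by blast
lemma H_ant2: "sum_list [m p (S q). (p, q) \<leftarrow> \<Delta> x] = sc (\<epsilon> x) e1" using hH unfolding hopf_algebra_def by blast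

lemma A_vs: "vector_space scA" using hA unfolding hopf_algebra_def by blast
lemma A_mbil: "bilin_map scA scA scA mA" using hA unfolding hopf_algebra_def by blast

lemma P_bil: "bilin_map sc scA (*) pr" using hP unfolding hopf_pairing_def by blast
lemma P_nd1: "(\<And>a. pr h a = 0) \<Longrightarrow> h = 0" using hP unfolding hopf_pairing_def by blast
lemma P_nd2: "(\<And>h. pr h a = 0) \<Longrightarrow> a = 0" using hP unfolding hopf_pairing_def by blast
lemma P_mulH: "pr (m g h) a = SL (\<Delta>A a) (\<lambda>x y. pr g x * pr h y)"
  using hP unfolding hopf_pairing_def SL_def by blast
lemma P_mulA: "pr h (mA a b) = SL (\<Delta> h) (\<lambda>x y. pr x a * pr y b)"
  using hP unfolding hopf_pairing_def SL_def by blast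
lemma P_oneH: "pr e1 a = \<epsilon>A a" using hP unfolding hopf_pairing_def by blast
lemma P_oneA: "pr h e1A = \<epsilon> h" using hP unfolding hopf_pairing_def by blast
lemma P_S: "pr (S h) a = pr h (SA a)" using hP unfolding hopf_pairing_def by blast

lemma R_qc: "teq2 sc (tmul2 m (map prod.swap (\<Delta> h)) R) (tmul2 m R (\<Delta> h))"
  using hR unfolding quasitriangular_def by blast
lemma R_copl: "teq3 sc (cop_l \<Delta> R) (tmul3 m [(x, e1, y). (x, y) \<leftarrow> R] [(e1, x, y). (x, y) \<leftarrow> R])"
  using hR unfolding quasitriangular_def by blast
lemma R_copr: "teq3 sc (cop_r \<Delta> R) (tmul3 m [(x, e1, y). (x, y) \<leftarrow> R] [(x, y, e1). (x, y) \<leftarrow> R])"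
  using hR unfolding quasitriangular_def by blast
lemma R_inv_ex: "\<exists>Ri. teq2 sc (tmul2 m R Ri) [(e1, e1)] \<and> teq2 sc (tmul2 m Ri R) [(e1, e1)]"
  using hR unfolding quasitriangular_def by blast

sublocale vsH: vector_space sc by (rule H_vs)

lemma linHH_id: "linHH (\<lambda>x. x)"
  by (simp add: lin_map_def)
lemma linHH_mL: "linHH f \<Longrightarrow> linHH (\<lambda>x. m (f x) g)"
  using H_mbil unfolding bilin_map_def lin_map_def by auto
lemma linHH_mR: "linHH f \<Longrightarrow> linHH (\<lambda>x. m g (f x))"
  using H_mbil unfolding bilin_map_def lin_map_def by auto
lemma linHH_S: "linHH f \<Longrightarrow> linHH (\<lambda>x. S (f x))"
  using H_Slin unfolding lin_map_def by auto
lemma linH_pr: "linHH f \<Longrightarrow> linH (\<lambda>x. pr (f x) a)"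
  using P_bil unfolding bilin_map_def lin_map_def by auto
lemma linH_eps: "linHH f \<Longrightarrow> linH (\<lambda>x. \<epsilon> (f x))"
  using H_epslin unfolding lin_map_def by auto
lemma linH_mulR: "linH F \<Longrightarrow> linH (\<lambda>x. F x * c)"
  unfolding lin_map_def by (auto simp: algebra_simps)
lemma linH_mulL: "linH F \<Longrightarrow> linH (\<lambda>x. c * F x)"
  unfolding lin_map_def by (auto simp: algebra_simps)
lemma linH_add: "linH F \<Longrightarrow> linH G \<Longrightarrow> linH (\<lambda>x. F x + G x)"
  unfolding lin_map_def by (auto simp: algebra_simps)
lemma linH_SL: "(\<And>u v. linH (\<lambda>x. G x u v)) \<Longrightarrow> linH (\<lambda>x. SL L (G x))"
proof -
  assume a: "\<And>u v. linH (\<lambda>x. G x u v)"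
  show ?thesis unfolding lin_map_def
  proof (intro conjI allI)
    fix x y have "SL L (G (x + y)) = SL L (\<lambda>u v. G x u v + G y u v)"
      using a unfolding lin_map_def by (intro SL_cong) auto
    then show "SL L (G (x + y)) = SL L (G x) + SL L (G y)" by (simp add: SL_add)
  next
    fix c x have "SL L (G (sc c x)) = SL L (\<lambda>u v. c * G x u v)"
      using a unfolding lin_map_def by (intro SL_cong) auto
    then show "SL L (G (sc c x)) = c * SL L (G x)" by (simp add: SL_mult_left)
  qed
qed
lemma linH_tri1: "tril T \<Longrightarrow> linHH f \<Longrightarrow> linH (\<lambda>x. T (f x) y z)"
  unfolding trilin_map_def lin_map_def by auto
lemma linH_tri2: "tril T \<Longrightarrow> linHH f \<Longrightarrow> linH (\<lambda>x. T y (f x) z)"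
  unfolding trilin_map_def lin_map_def by auto
lemma linH_tri3: "tril T \<Longrightarrow> linHH f \<Longrightarrow> linH (\<lambda>x. T y z (f x))"
  unfolding trilin_map_def lin_map_def by auto
lemma linH_bi1: "bil T \<Longrightarrow> linHH f \<Longrightarrow> linH (\<lambda>x. T (f x) y)"
  unfolding bilin_map_def lin_map_def by auto
lemma linH_bi2: "bil T \<Longrightarrow> linHH f \<Longrightarrow> linH (\<lambda>x. T y (f x))"
  unfolding bilin_map_def lin_map_def by auto
lemma linH_F: "linH F \<Longrightarrow> linHH f \<Longrightarrow> linH (\<lambda>x. F (f x))"
  unfolding lin_map_def by auto
lemma bil_I: "(\<And>y. linH (\<lambda>x. G x y)) \<Longrightarrow> (\<And>x. linH (\<lambda>y. G x y)) \<Longrightarrow> bil G"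
  unfolding bilin_map_def by auto
lemma tril_I: "(\<And>y z. linH (\<lambda>x. G x y z)) \<Longrightarrow> (\<And>x z. linH (\<lambda>y. G x y z)) \<Longrightarrow> (\<And>x y. linH (\<lambda>z. G x y z)) \<Longrightarrow> tril G"
  unfolding trilin_map_def by auto

lemma cop_lin: "bil G \<Longrightarrow> linH (\<lambda>x. SL (\<Delta> x) G)"
proof -
  assume g: "bil G"
  have gs: "\<And>c p q. G (sc c p) q = c * G p q" using g unfolding bilin_map_def lin_map_def by auto
  show ?thesis unfolding lin_map_def
  proof (intro conjI allI)
    fix x y show "SL (\<Delta> (x + y)) G = SL (\<Delta> x) G + SL (\<Delta> y) G"
      using teq2_SL[OF H_copadd g] by simp
  next
    fix c x show "SL (\<Delta> (sc c x)) G = c * SL (\<Delta> x) G"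
      using teq2_SL[OF H_copsc g] by (simp add: SL_comp gs SL_mult_left)
  qed
qed
lemma linH_cop: "bil G \<Longrightarrow> linHH f \<Longrightarrow> linH (\<lambda>x. SL (\<Delta> (f x)) G)"
  using cop_lin linH_F by blast

lemmas lin_intros = linHH_id linHH_mL linHH_mR linHH_S linH_pr linH_eps linH_mulR linH_mulL
  linH_add linH_SL linH_cop bil_I tril_I

end

context QT begin

lemma B_cou1: assumes f: "linH F" shows "SL (\<Delta> x) (\<lambda>p q. \<epsilon> p * F q) = F x"
proof -
  have "F x = F (sum_list [sc (\<epsilon> p) q. (p, q) \<leftarrow> \<Delta> x])" by (simp add: H_cou1)
  also have "\<dots> = SL (\<Delta> x) (\<lambda>p q. F (sc (\<epsilon> p) q))"
    using lin_sum_list[OF f] by (simp add: SL_comp_fun)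
  also have "\<dots> = SL (\<Delta> x) (\<lambda>p q. \<epsilon> p * F q)" using lin_scale[OF f] by simp
  finally show ?thesis by simp
qed
lemma B_cou2: assumes f: "linH F" shows "SL (\<Delta> x) (\<lambda>p q. \<epsilon> q * F p) = F x"
proof -
  have "F x = F (sum_list [sc (\<epsilon> q) p. (p, q) \<leftarrow> \<Delta> x])" by (simp add: H_cou2)
  also have "\<dots> = SL (\<Delta> x) (\<lambda>p q. F (sc (\<epsilon> q) p))"
    using lin_sum_list[OF f] by (simp add: SL_comp_fun)
  also have "\<dots> = SL (\<Delta> x) (\<lambda>p q. \<epsilon> q * F p)" using lin_scale[OF f] by simp
  finally show ?thesis by simp
qed
lemma B_ant1: assumes f: "linH F" shows "SL (\<Delta> x) (\<lambda>p q. F (m (S p) q)) = \<epsilon> x * F e1"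
proof -
  have "SL (\<Delta> x) (\<lambda>p q. F (m (S p) q)) = F (sum_list [m (S p) q. (p, q) \<leftarrow> \<Delta> x])"
    using lin_sum_list[OF f] by (simp add: SL_comp_fun)
  also have "\<dots> = \<epsilon> x * F e1" by (simp add: H_ant1 lin_scale[OF f])
  finally show ?thesis .
qed
lemma B_ant2: assumes f: "linH F" shows "SL (\<Delta> x) (\<lambda>p q. F (m p (S q))) = \<epsilon> x * F e1"
proof -
  have "SL (\<Delta> x) (\<lambda>p q. F (m p (S q))) = F (sum_list [m p (S q). (p, q) \<leftarrow> \<Delta> x])"
    using lin_sum_list[OF f] by (simp add: SL_comp_fun)
  also have "\<dots> = \<epsilon> x * F e1" by (simp add: H_ant2 lin_scale[OF f])
  finally show ?thesis .
qed
lemma B_coass: assumes g: "tril G"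
  shows "SL (\<Delta> x) (\<lambda>y z. SL (\<Delta> y) (\<lambda>p q. G p q z)) = SL (\<Delta> x) (\<lambda>y z. SL (\<Delta> z) (\<lambda>p q. G y p q))"
  using teq3_SL[OF H_coass g] by (simp add: SL3_cop_l SL3_cop_r)
lemma B_copmul: assumes g: "bil G"
  shows "SL (\<Delta> (m x y)) G = SL (\<Delta> x) (\<lambda>p q. SL (\<Delta> y) (\<lambda>p' q'. G (m p p') (m q q')))"
  using teq2_SL[OF H_copmul g] by (simp add: SL_tmul2)
lemma B_copone: assumes g: "bil G" shows "SL (\<Delta> e1) G = G e1 e1"
  using teq2_SL[OF H_copone g] by simp
lemma R_qcS: assumes g: "bil G"
  shows "SL (\<Delta> h) (\<lambda>p q. SL R (\<lambda>x y. G (m q x) (m p y))) = SL R (\<lambda>x y. SL (\<Delta> h) (\<lambda>p q. G (m x p) (m y q)))"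
  using teq2_SL[OF R_qc g] by (simp add: SL_tmul2 SL_swapmap)
lemma R_coplS: assumes g: "tril G"
  shows "SL R (\<lambda>x y. SL (\<Delta> x) (\<lambda>p q. G p q y)) = SL R (\<lambda>x y. SL R (\<lambda>x' y'. G x x' (m y y')))"
  using teq3_SL[OF R_copl g] by (simp add: SL3_cop_l SL3_tmul3 SL3_comp SL3_Pair)
lemma R_coprS: assumes g: "tril G"
  shows "SL R (\<lambda>x y. SL (\<Delta> y) (\<lambda>p q. G x p q)) = SL R (\<lambda>x y. SL R (\<lambda>x' y'. G (m x x') y' y))"
  using teq3_SL[OF R_copr g] by (simp add: SL3_cop_r SL3_tmul3 SL3_comp SL3_Pair)

lemma H_ext: assumes "\<And>a. pr x a = pr y a" shows "x = y"
proof -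
  have l: "\<And>a. lin_map sc (*) (\<lambda>x. pr x a)" by (intro lin_intros)
  have "x - y = 0" by (rule P_nd1) (simp add: lin_diff[OF l] assms)
  then show ?thesis by simp
qed

end

context QT begin

definition Ri where "Ri = (SOME Ri. teq2 sc (tmul2 m R Ri) [(e1, e1)] \<and> teq2 sc (tmul2 m Ri R) [(e1, e1)])"
lemma Ri_prop: "teq2 sc (tmul2 m R Ri) [(e1, e1)] \<and> teq2 sc (tmul2 m Ri R) [(e1, e1)]"
  unfolding Ri_def using R_inv_ex by (rule someI_ex)
lemma RRi: assumes g: "bil G" shows "SL R (\<lambda>x y. SL Ri (\<lambda>s t. G (m x s) (m y t))) = G e1 e1"
  using teq2_SL[OF conjunct1[OF Ri_prop] g] by (simp add: SL_tmul2)
lemma RiR: assumes g: "bil G" shows "SL Ri (\<lambda>s t. SL R (\<lambda>x y. G (m s x) (m t y))) = G e1 e1"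
  using teq2_SL[OF conjunct2[OF Ri_prop] g] by (simp add: SL_tmul2)

lemma bil_lin1: "bil G \<Longrightarrow> linH (\<lambda>x. G x y)" unfolding bilin_map_def by auto
lemma bil_lin2: "bil G \<Longrightarrow> linH (\<lambda>y. G x y)" unfolding bilin_map_def by auto

lemma H1a_aux: assumes p: "bil \<phi>" shows "SL R \<phi> = SL R (\<lambda>x y. SL R (\<lambda>x' y'. \<epsilon> y * \<phi> (m x x') y'))"
proof -
  have t: "tril (\<lambda>x p q. \<epsilon> q * \<phi> x p)"
    by (intro lin_intros linH_bi1[OF p] linH_bi2[OF p])
  have "SL R \<phi> = SL R (\<lambda>x y. SL (\<Delta> y) (\<lambda>p q. \<epsilon> q * \<phi> x p))"
    using B_cou2[OF bil_lin2[OF p]] by simp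
  also have "\<dots> = SL R (\<lambda>x y. SL R (\<lambda>x' y'. \<epsilon> y * \<phi> (m x x') y'))"
    by (rule R_coprS[OF t])
  finally show ?thesis .
qed

lemma H1a: assumes f: "linH F" shows "SL R (\<lambda>x y. \<epsilon> y * F x) = F e1"
proof -
  define \<psi> where "\<psi> = (\<lambda>u v. F u * \<epsilon> v)"
  have p: "bil \<psi>" unfolding \<psi>_def by (intro lin_intros linH_F[OF f])
  have "F e1 = \<psi> e1 e1" by (simp add: \<psi>_def)
  also have "\<dots> = SL R (\<lambda>x y. SL Ri (\<lambda>s t. \<psi> (m x s) (m y t)))" by (rule RRi[OF p, symmetric])
  also have "\<dots> = SL Ri (\<lambda>s t. SL R (\<lambda>x y. \<psi> (m x s) (m y t)))" by (rule SL_swap)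
  also have "\<dots> = SL Ri (\<lambda>s t. SL R (\<lambda>x y. SL R (\<lambda>x' y'. \<epsilon> y * \<psi> (m (m x x') s) (m y' t))))"
  proof (rule SL_cong)
    fix s t
    have "bil (\<lambda>x y. \<psi> (m x s) (m y t))" unfolding \<psi>_def by (intro lin_intros linH_F[OF f])
    from H1a_aux[OF this] show "SL R (\<lambda>x y. \<psi> (m x s) (m y t)) = SL R (\<lambda>x y. SL R (\<lambda>x' y'. \<epsilon> y * \<psi> (m (m x x') s) (m y' t)))" .
  qed
  also have "\<dots> = SL R (\<lambda>x y. \<epsilon> y * SL R (\<lambda>x' y'. SL Ri (\<lambda>s t. \<psi> (m x (m x' s)) (m y' t))))"
    apply (rule trans[OF SL_swap3])
    apply (simp add: SL_mult_left H_assoc)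
    done
  also have "\<dots> = SL R (\<lambda>x y. \<epsilon> y * \<psi> (m x e1) (m e1 e1))"
  proof (rule SL_cong)
    fix x y
    have "bil (\<lambda>u v. \<psi> (m x u) v)" unfolding \<psi>_def by (intro lin_intros linH_F[OF f])
    from RRi[OF this] show "\<epsilon> y * SL R (\<lambda>x' y'. SL Ri (\<lambda>s t. \<psi> (m x (m x' s)) (m y' t))) = \<epsilon> y * \<psi> (m x e1) (m e1 e1)"
      by simp
  qed
  also have "\<dots> = SL R (\<lambda>x y. \<epsilon> y * F x)" by (simp add: \<psi>_def)
  finally show ?thesis by simp
qed

end

context QT begin

lemma H1b_aux: assumes p: "bil \<phi>" shows "SL R \<phi> = SL R (\<lambda>x y. SL R (\<lambda>x' y'. \<epsilon> x * \<phi> x' (m y y')))"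
proof -
  have t: "tril (\<lambda>p q y. \<epsilon> p * \<phi> q y)"
    by (intro lin_intros linH_bi1[OF p] linH_bi2[OF p])
  have "SL R \<phi> = SL R (\<lambda>x y. SL (\<Delta> x) (\<lambda>p q. \<epsilon> p * \<phi> q y))"
    using B_cou1[OF bil_lin1[OF p]] by simp
  also have "\<dots> = SL R (\<lambda>x y. SL R (\<lambda>x' y'. \<epsilon> x * \<phi> x' (m y y')))"
    by (rule R_coplS[OF t])
  finally show ?thesis .
qed

lemma H1b: assumes f: "linH F" shows "SL R (\<lambda>x y. \<epsilon> x * F y) = F e1"
proof -
  define \<psi> where "\<psi> = (\<lambda>u v. \<epsilon> u * F v)"
  have p: "bil \<psi>" unfolding \<psi>_def by (intro lin_intros linH_F[OF f])
  have "F e1 = \<psi> e1 e1" by (simp add: \<psi>_def)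
  also have "\<dots> = SL R (\<lambda>x y. SL Ri (\<lambda>s t. \<psi> (m x s) (m y t)))" by (rule RRi[OF p, symmetric])
  also have "\<dots> = SL Ri (\<lambda>s t. SL R (\<lambda>x y. \<psi> (m x s) (m y t)))" by (rule SL_swap)
  also have "\<dots> = SL Ri (\<lambda>s t. SL R (\<lambda>x y. SL R (\<lambda>x' y'. \<epsilon> x * \<psi> (m x' s) (m (m y y') t))))"
  proof (rule SL_cong)
    fix s t
    have "bil (\<lambda>x y. \<psi> (m x s) (m y t))" unfolding \<psi>_def by (intro lin_intros linH_F[OF f])
    from H1b_aux[OF this] show "SL R (\<lambda>x y. \<psi> (m x s) (m y t)) = SL R (\<lambda>x y. SL R (\<lambda>x' y'. \<epsilon> x * \<psi> (m x' s) (m (m y y') t)))" .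
  qed
  also have "\<dots> = SL R (\<lambda>x y. \<epsilon> x * SL R (\<lambda>x' y'. SL Ri (\<lambda>s t. \<psi> (m x' s) (m y (m y' t)))))"
    apply (rule trans[OF SL_swap3])
    apply (simp add: SL_mult_left H_assoc)
    done
  also have "\<dots> = SL R (\<lambda>x y. \<epsilon> x * \<psi> (m e1 e1) (m y e1))"
  proof (rule SL_cong)
    fix x y
    have "bil (\<lambda>u v. \<psi> u (m y v))" unfolding \<psi>_def by (intro lin_intros linH_F[OF f])
    from RRi[OF this] show "\<epsilon> x * SL R (\<lambda>x' y'. SL Ri (\<lambda>s t. \<psi> (m x' s) (m y (m y' t)))) = \<epsilon> x * \<psi> (m e1 e1) (m y e1)"
      by simp
  qed
  also have "\<dots> = SL R (\<lambda>x y. \<epsilon> x * F y)" by (simp add: \<psi>_def)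
  finally show ?thesis by simp
qed

lemma I1: assumes g: "bil G" shows "SL R (\<lambda>x y. SL R (\<lambda>x' y'. G (m x x') (m (S y') y))) = G e1 e1"
proof -
  have t: "tril (\<lambda>x p q. G x (m (S p) q))" by (intro lin_intros linH_bi1[OF g] linH_bi2[OF g])
  have "SL R (\<lambda>x y. SL R (\<lambda>x' y'. G (m x x') (m (S y') y))) = SL R (\<lambda>x y. SL (\<Delta> y) (\<lambda>p q. G x (m (S p) q)))"
    by (rule R_coprS[OF t, symmetric])
  also have "\<dots> = SL R (\<lambda>x y. \<epsilon> y * G x e1)"
    by (rule SL_cong) (rule B_ant1[OF bil_lin2[OF g]])
  also have "\<dots> = G e1 e1" by (rule H1a) (intro lin_intros linH_bi1[OF g])
  finally show ?thesis .
qed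

lemma SR_R: assumes g: "bil G" shows "SL R (\<lambda>x y. SL R (\<lambda>x' y'. G (m (S x) x') (m y y'))) = G e1 e1"
proof -
  have t: "tril (\<lambda>p q y. G (m (S p) q) y)" by (intro lin_intros linH_bi1[OF g] linH_bi2[OF g])
  have "SL R (\<lambda>x y. SL R (\<lambda>x' y'. G (m (S x) x') (m y y'))) = SL R (\<lambda>x y. SL (\<Delta> x) (\<lambda>p q. G (m (S p) q) y))"
    by (rule R_coplS[OF t, symmetric])
  also have "\<dots> = SL R (\<lambda>x y. \<epsilon> x * G e1 y)"
    by (rule SL_cong, rule B_ant1, intro lin_intros linH_bi1[OF g])
  also have "\<dots> = G e1 e1" by (rule H1b[OF bil_lin2[OF g]])
  finally show ?thesis .
qed

lemma S_one[simp]: "S e1 = e1"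
proof (rule H_ext)
  fix c
  have "pr (S e1) c = SL (\<Delta> e1) (\<lambda>p q. pr (m (S p) q) c)" by (subst B_copone) (intro lin_intros, simp)
  also have "\<dots> = \<epsilon> e1 * pr e1 c" by (rule B_ant1) (intro lin_intros)
  finally show "pr (S e1) c = pr e1 c" by simp
qed

end

context QT begin

lemma S_anti: "S (m g h) = m (S h) (S g)"
proof (rule H_ext)
  fix c
  define \<Phi> where "\<Phi> = (\<lambda>p q g2. SL (\<Delta> h) (\<lambda>h1 h2. SL (\<Delta> h1) (\<lambda>p' q'. pr (m (m (S (m p p')) (m q q')) (m (S h2) (S g2))) c)))"
  have tPhi: "tril \<Phi>" unfolding \<Phi>_def by (intro lin_intros)
  have e1: "\<And>g2. SL (\<Delta> h) (\<lambda>h1 h2. \<epsilon> h1 * pr (m (S h2) (S g2)) c) = pr (m (S h) (S g2)) c"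
    by (rule B_cou1) (intro lin_intros)
  have "pr (m (S h) (S g)) c = SL (\<Delta> g) (\<lambda>g1 g2. \<epsilon> g1 * pr (m (S h) (S g2)) c)"
    by (rule B_cou1[symmetric]) (intro lin_intros)
  also have "\<dots> = SL (\<Delta> g) (\<lambda>g1 g2. SL (\<Delta> h) (\<lambda>h1 h2. \<epsilon> (m g1 h1) * pr (m (S h2) (S g2)) c))"
    by (simp only: e1[symmetric] SL_mult_left H_epsmul mult.assoc)
  also have "\<dots> = SL (\<Delta> g) (\<lambda>g1 g2. SL (\<Delta> h) (\<lambda>h1 h2. SL (\<Delta> (m g1 h1)) (\<lambda>p q. pr (m (m (S p) q) (m (S h2) (S g2))) c)))"
  proof -
    have "\<And>g1 g2 h1 h2. SL (\<Delta> (m g1 h1)) (\<lambda>p q. pr (m (m (S p) q) (m (S h2) (S g2))) c) = \<epsilon> (m g1 h1) * pr (m e1 (m (S h2) (S g2))) c"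
      by (rule B_ant1) (intro lin_intros)
    then show ?thesis by simp
  qed
  also have "\<dots> = SL (\<Delta> g) (\<lambda>g1 g2. SL (\<Delta> h) (\<lambda>h1 h2. SL (\<Delta> g1) (\<lambda>p q. SL (\<Delta> h1) (\<lambda>p' q'. pr (m (m (S (m p p')) (m q q')) (m (S h2) (S g2))) c))))"
  proof -
    have "\<And>g1 g2 h1 h2. SL (\<Delta> (m g1 h1)) (\<lambda>p q. pr (m (m (S p) q) (m (S h2) (S g2))) c) = SL (\<Delta> g1) (\<lambda>p q. SL (\<Delta> h1) (\<lambda>p' q'. pr (m (m (S (m p p')) (m q q')) (m (S h2) (S g2))) c))"
      by (rule B_copmul) (intro lin_intros)
    then show ?thesis by simp
  qed
  also have "\<dots> = SL (\<Delta> g) (\<lambda>g1 g2. SL (\<Delta> g1) (\<lambda>p q. \<Phi> p q g2))"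
    unfolding \<Phi>_def by (rule SL_cong, rule SL_swap)
  also have "\<dots> = SL (\<Delta> g) (\<lambda>g1 g2. SL (\<Delta> g2) (\<lambda>q g3. \<Phi> g1 q g3))"
    by (rule B_coass[OF tPhi])
  also have "\<dots> = SL (\<Delta> g) (\<lambda>g1 g2. SL (\<Delta> g2) (\<lambda>q g3. SL (\<Delta> h) (\<lambda>h1 h2. SL (\<Delta> h2) (\<lambda>q' h3. pr (m (m (S (m g1 h1)) (m q q')) (m (S h3) (S g3))) c))))"
  proof -
    have "\<And>g1 q g3. \<Phi> g1 q g3 = SL (\<Delta> h) (\<lambda>h1 h2. SL (\<Delta> h2) (\<lambda>q' h3. pr (m (m (S (m g1 h1)) (m q q')) (m (S h3) (S g3))) c))"
      unfolding \<Phi>_def by (rule B_coass) (intro lin_intros)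
    then show ?thesis by simp
  qed
  also have "\<dots> = SL (\<Delta> g) (\<lambda>g1 g2. SL (\<Delta> g2) (\<lambda>q g3. SL (\<Delta> h) (\<lambda>h1 h2. \<epsilon> h2 * pr (m (m (S (m g1 h1)) q) (S g3)) c)))"
  proof -
    have "\<And>g1 q g3 h1 h2. SL (\<Delta> h2) (\<lambda>q' h3. pr (m (m (S (m g1 h1)) q) (m (m q' (S h3)) (S g3))) c) = \<epsilon> h2 * pr (m (m (S (m g1 h1)) q) (m e1 (S g3))) c"
      by (rule B_ant2) (intro lin_intros)
    then show ?thesis by (simp add: H_assoc)
  qed
  also have "\<dots> = SL (\<Delta> g) (\<lambda>g1 g2. SL (\<Delta> g2) (\<lambda>q g3. pr (m (m (S (m g1 h)) q) (S g3)) c))"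
  proof -
    have "\<And>g1 q g3. SL (\<Delta> h) (\<lambda>h1 h2. \<epsilon> h2 * pr (m (m (S (m g1 h1)) q) (S g3)) c) = pr (m (m (S (m g1 h)) q) (S g3)) c"
      by (rule B_cou2) (intro lin_intros)
    then show ?thesis by simp
  qed
  also have "\<dots> = SL (\<Delta> g) (\<lambda>g1 g2. \<epsilon> g2 * pr (S (m g1 h)) c)"
  proof -
    have "\<And>g1 g2. SL (\<Delta> g2) (\<lambda>q g3. pr (m (S (m g1 h)) (m q (S g3))) c) = \<epsilon> g2 * pr (m (S (m g1 h)) e1) c"
      by (rule B_ant2) (intro lin_intros)
    then show ?thesis by (simp add: H_assoc)
  qed
  also have "\<dots> = pr (S (m g h)) c"
    by (rule B_cou2) (intro lin_intros)
  finally show "pr (S (m g h)) c = pr (m (S h) (S g)) c" by simp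
qed

end

context QT begin

lemma SSR_aux: assumes p: "bil \<Phi>" shows "SL R (\<lambda>x y. SL R (\<lambda>x' y'. \<Phi> (m (S x') (S x)) (m (S y') y))) = \<Phi> e1 e1"
proof -
  have "bil (\<lambda>u v. \<Phi> (S u) v)" by (intro lin_intros linH_bi1[OF p] linH_bi2[OF p])
  from I1[OF this] show ?thesis by (simp add: S_anti)
qed

lemma SSR: assumes p: "bil \<Phi>" shows "SL R (\<lambda>x y. \<Phi> (S x) (S y)) = SL R \<Phi>"
proof -
  have "SL R (\<lambda>x y. \<Phi> (S x) (S y)) = SL R (\<lambda>x y. SL R (\<lambda>a b. SL R (\<lambda>c d. \<Phi> (m (S x) (m (S a) c)) (m (S y) (m b d)))))"
  proof (rule SL_cong)
    fix x y
    have "bil (\<lambda>u v. \<Phi> (m (S x) u) (m (S y) v))" by (intro lin_intros linH_bi1[OF p] linH_bi2[OF p])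
    from SR_R[OF this] show "\<Phi> (S x) (S y) = SL R (\<lambda>a b. SL R (\<lambda>c d. \<Phi> (m (S x) (m (S a) c)) (m (S y) (m b d))))"
      by simp
  qed
  also have "\<dots> = SL R (\<lambda>c d. SL R (\<lambda>a b. SL R (\<lambda>x y. \<Phi> (m (S x) (m (S a) c)) (m (S y) (m b d)))))"
    by (rule SL_rev3)
  also have "\<dots> = SL R (\<lambda>c d. \<Phi> (m e1 c) (m e1 d))"
  proof (rule SL_cong)
    fix c d
    have "bil (\<lambda>u v. \<Phi> (m u c) (m v d))" by (intro lin_intros linH_bi1[OF p] linH_bi2[OF p])
    from SSR_aux[OF this] show "SL R (\<lambda>a b. SL R (\<lambda>x y. \<Phi> (m (S x) (m (S a) c)) (m (S y) (m b d)))) = \<Phi> (m e1 c) (m e1 d)"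
      by (simp add: H_assoc)
  qed
  finally show ?thesis by simp
qed

lemma Dident: assumes t: "tril G"
  shows "SL R (\<lambda>v1 v2. SL (\<Delta> v1) (\<lambda>p q. G (S p) q (S v2))) = SL R (\<lambda>x y. SL R (\<lambda>x' y'. G x x' (m (S y') y)))"
proof -
  have t1: "tril (\<lambda>p q y. G (S p) q (S y))" by (intro lin_intros linH_tri1[OF t] linH_tri2[OF t] linH_tri3[OF t])
  have "SL R (\<lambda>v1 v2. SL (\<Delta> v1) (\<lambda>p q. G (S p) q (S v2))) = SL R (\<lambda>x y. SL R (\<lambda>x' y'. G (S x) x' (S (m y y'))))"
    by (rule R_coplS[OF t1])
  also have "\<dots> = SL R (\<lambda>x y. SL R (\<lambda>x' y'. G (S x) x' (m (S y') (S y))))" by (simp add: S_anti)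
  also have "\<dots> = SL R (\<lambda>x y. SL R (\<lambda>x' y'. G x x' (m (S y') y)))"
  proof -
    have "bil (\<lambda>u v. SL R (\<lambda>x' y'. G u x' (m (S y') v)))" by (intro lin_intros linH_tri1[OF t] linH_tri2[OF t] linH_tri3[OF t])
    from SSR[OF this] show ?thesis .
  qed
  finally show ?thesis .
qed

lemma YBE: assumes t: "tril G"
  shows "SL R (\<lambda>x y. SL R (\<lambda>x' y'. SL R (\<lambda>x'' y''. G (m x x') (m y x'') (m y' y''))))
       = SL R (\<lambda>x y. SL R (\<lambda>x' y'. SL R (\<lambda>x'' y''. G (m x'' x) (m x' y) (m y' y''))))"
proof -
  have "SL R (\<lambda>x y. SL R (\<lambda>x' y'. SL R (\<lambda>x'' y''. G (m x x') (m y x'') (m y' y''))))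
      = SL R (\<lambda>x y. SL R (\<lambda>x' y'. SL (\<Delta> x') (\<lambda>p q. G (m x p) (m y q) y')))"
  proof (rule SL_cong)
    fix x y
    have "tril (\<lambda>p q w. G (m x p) (m y q) w)" by (intro lin_intros linH_tri1[OF t] linH_tri2[OF t] linH_tri3[OF t])
    from R_coplS[OF this] show "SL R (\<lambda>x' y'. SL R (\<lambda>x'' y''. G (m x x') (m y x'') (m y' y''))) = SL R (\<lambda>x' y'. SL (\<Delta> x') (\<lambda>p q. G (m x p) (m y q) y'))"
      by simp
  qed
  also have "\<dots> = SL R (\<lambda>x' y'. SL R (\<lambda>x y. SL (\<Delta> x') (\<lambda>p q. G (m x p) (m y q) y')))" by (rule SL_swap)
  also have "\<dots> = SL R (\<lambda>x' y'. SL (\<Delta> x') (\<lambda>p q. SL R (\<lambda>x y. G (m q x) (m p y) y')))"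
  proof (rule SL_cong)
    fix x' y'
    have "bil (\<lambda>u v. G u v y')" by (intro lin_intros linH_tri1[OF t] linH_tri2[OF t] linH_tri3[OF t])
    from R_qcS[OF this, of x'] show "SL R (\<lambda>x y. SL (\<Delta> x') (\<lambda>p q. G (m x p) (m y q) y')) = SL (\<Delta> x') (\<lambda>p q. SL R (\<lambda>x y. G (m q x) (m p y) y'))"
      by simp
  qed
  also have "\<dots> = SL R (\<lambda>x' y'. SL R (\<lambda>x'' y''. SL R (\<lambda>x y. G (m x'' x) (m x' y) (m y' y''))))"
  proof -
    have "tril (\<lambda>p q w. SL R (\<lambda>x y. G (m q x) (m p y) w))" by (intro lin_intros linH_tri1[OF t] linH_tri2[OF t] linH_tri3[OF t])
    from R_coplS[OF this] show ?thesis .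
  qed
  also have "\<dots> = SL R (\<lambda>x y. SL R (\<lambda>x'' y''. SL R (\<lambda>x' y'. G (m x'' x) (m x' y) (m y' y''))))"
    by (rule SL_rev3)
  also have "\<dots> = SL R (\<lambda>x y. SL R (\<lambda>x' y'. SL R (\<lambda>x'' y''. G (m x'' x) (m x' y) (m y' y''))))"
    by (rule SL_cong, rule SL_swap)
  finally show ?thesis .
qed

end

context QT begin

lemma linA_pr: "linA (pr h)" using P_bil unfolding bilin_map_def by auto
lemma pr_sum_list: "pr h (sum_list xs) = sum_list (map (pr h) xs)" by (rule lin_sum_list[OF linA_pr])
lemma pr_scA: "pr h (scA c x) = c * pr h x" by (rule lin_scale[OF linA_pr])
lemma SL_swapHA: "SL (L::('h\<times>'h) list) (\<lambda>x y. SL (M::('a\<times>'a) list) (F x y)) = SL M (\<lambda>u v. SL L (\<lambda>x y. F x y u v))"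
  by (rule SL_swap)
lemma sum_list_concat_map: "sum_list (map f (concat xss)) = sum_list (map (\<lambda>xs. sum_list (map f xs)) xss)"
  by (induction xss) auto

lemma CV1: "pr h (bmul A pr R a b) = SL R (\<lambda>r1 r2. SL (\<Delta> r1) (\<lambda>p q. SL (\<Delta> h) (\<lambda>s t. pr (m (S p) (m s q)) a * pr (m (S r2) t) b)))"
  unfolding bmul_def Rform_def
  apply (simp add: pr_sum_list pr_scA sum_list_concat_map SL_def[symmetric] P_mulA P_mulH P_S[symmetric] SL_comp_fun)
  apply (simp only: SL_mult_left SL_mult_right SL_swapHA)
  apply (rule sym, rule trans[OF SL_swap3g], rule sym)
  apply (intro SL_cong)
  apply (rule trans[OF SL_swap3g])
  apply (intro SL_cong)
  apply (simp add: ac_simps)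
  done

end

context QT begin

lemma P3_AB: assumes t: "tril T" shows
 "SL R (\<lambda>x y. SL R (\<lambda>x' y'. SL R (\<lambda>r1 r2. SL (\<Delta> r1) (\<lambda>p q. SL (\<Delta> (m y x')) (\<lambda>s t. T (m (S p) (m s q)) (m (S r2) t) (m x y'))))))
= SL R (\<lambda>x y. SL R (\<lambda>x2 y2. SL R (\<lambda>x' y'. SL R (\<lambda>x3 y3. SL R (\<lambda>r1 r2. SL (\<Delta> r1) (\<lambda>p q. T (m (S p) (m (m y2 x') q)) (m (S r2) (m y x3)) (m (m x x2) (m y' y3))))))))"
  (is "?L = ?R")
proof -
  note ti = lin_intros linH_tri1[OF t] linH_tri2[OF t] linH_tri3[OF t]
  have "?L = SL R (\<lambda>x y. SL R (\<lambda>x' y'. SL R (\<lambda>r1 r2. SL (\<Delta> r1) (\<lambda>p q. SL (\<Delta> y) (\<lambda>s1 t1. SL (\<Delta> x') (\<lambda>s2 t2. T (m (S p) (m (m s1 s2) q)) (m (S r2) (m t1 t2)) (m x y')))))))"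
  proof -
    have "\<And>x y x' y' p q r2. SL (\<Delta> (m y x')) (\<lambda>s t. T (m (S p) (m s q)) (m (S r2) t) (m x y'))
       = SL (\<Delta> y) (\<lambda>s1 t1. SL (\<Delta> x') (\<lambda>s2 t2. T (m (S p) (m (m s1 s2) q)) (m (S r2) (m t1 t2)) (m x y')))"
      by (rule B_copmul) (intro ti)
    then show ?thesis by simp
  qed
  also have "\<dots> = SL R (\<lambda>x y. SL R (\<lambda>x' y'. SL R (\<lambda>r1 r2. SL (\<Delta> y) (\<lambda>s1 t1. SL (\<Delta> r1) (\<lambda>p q. SL (\<Delta> x') (\<lambda>s2 t2. T (m (S p) (m (m s1 s2) q)) (m (S r2) (m t1 t2)) (m x y')))))))"
    by (rule SL_cong, rule SL_cong, rule SL_cong, rule SL_swap)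
  also have "\<dots> = SL R (\<lambda>x y. SL R (\<lambda>x' y'. SL (\<Delta> y) (\<lambda>s1 t1. SL R (\<lambda>r1 r2. SL (\<Delta> r1) (\<lambda>p q. SL (\<Delta> x') (\<lambda>s2 t2. T (m (S p) (m (m s1 s2) q)) (m (S r2) (m t1 t2)) (m x y')))))))"
    by (rule SL_cong, rule SL_cong, rule SL_swap)
  also have "\<dots> = SL R (\<lambda>x y. SL (\<Delta> y) (\<lambda>s1 t1. SL R (\<lambda>x' y'. SL R (\<lambda>r1 r2. SL (\<Delta> r1) (\<lambda>p q. SL (\<Delta> x') (\<lambda>s2 t2. T (m (S p) (m (m s1 s2) q)) (m (S r2) (m t1 t2)) (m x y')))))))"
    by (rule SL_cong, rule SL_swap)
  also have "\<dots> = SL R (\<lambda>x y. SL (\<Delta> y) (\<lambda>s1 t1. SL R (\<lambda>x' y'. SL R (\<lambda>r1 r2. SL (\<Delta> x') (\<lambda>s2 t2. SL (\<Delta> r1) (\<lambda>p q. T (m (S p) (m (m s1 s2) q)) (m (S r2) (m t1 t2)) (m x y')))))))"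
    by (rule SL_cong, rule SL_cong, rule SL_cong, rule SL_cong, rule SL_swap)
  also have "\<dots> = SL R (\<lambda>x y. SL (\<Delta> y) (\<lambda>s1 t1. SL R (\<lambda>x' y'. SL (\<Delta> x') (\<lambda>s2 t2. SL R (\<lambda>r1 r2. SL (\<Delta> r1) (\<lambda>p q. T (m (S p) (m (m s1 s2) q)) (m (S r2) (m t1 t2)) (m x y')))))))"
    by (rule SL_cong, rule SL_cong, rule SL_cong, rule SL_swap)
  also have "\<dots> = SL R (\<lambda>x y. SL R (\<lambda>x2 y2. SL R (\<lambda>x' y'. SL (\<Delta> x') (\<lambda>s2 t2. SL R (\<lambda>r1 r2. SL (\<Delta> r1) (\<lambda>p q. T (m (S p) (m (m y2 s2) q)) (m (S r2) (m y t2)) (m (m x x2) y')))))))"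
    by (rule R_coprS) (intro ti)
  also have "\<dots> = ?R"
  proof (rule SL_cong, rule SL_cong)
    fix x y x2 y2
    show "SL R (\<lambda>x' y'. SL (\<Delta> x') (\<lambda>s2 t2. SL R (\<lambda>r1 r2. SL (\<Delta> r1) (\<lambda>p q. T (m (S p) (m (m y2 s2) q)) (m (S r2) (m y t2)) (m (m x x2) y')))))
      = SL R (\<lambda>x' y'. SL R (\<lambda>x3 y3. SL R (\<lambda>r1 r2. SL (\<Delta> r1) (\<lambda>p q. T (m (S p) (m (m y2 x') q)) (m (S r2) (m y x3)) (m (m x x2) (m y' y3))))))"
      by (rule R_coplS) (intro ti)
  qed
  finally show ?thesis .
qed

end

context QT begin

lemma P3_CD: assumes t: "tril T" shows
 "SL R (\<lambda>x y. SL R (\<lambda>x2 y2. SL R (\<lambda>x' y'. SL R (\<lambda>x3 y3. SL R (\<lambda>r1 r2. SL (\<Delta> r1) (\<lambda>p q. T (m (S p) (m (m y2 x') q)) (m (S r2) (m y x3)) (m (m x x2) (m y' y3))))))))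
= SL R (\<lambda>x2 y2. SL R (\<lambda>x' y'. SL R (\<lambda>x y. SL R (\<lambda>x3 y3. T (m y2 x') (m y x3) (m (m x2 y') (m x y3))))))"
  (is "?L = ?R")
proof -
  note ti = lin_intros linH_tri1[OF t] linH_tri2[OF t] linH_tri3[OF t]
  define B where "B = (\<lambda>x y x2 y2 x' y' x3 y3 t1 t2 u1 u2. T (m t1 (m (m y2 x') u1)) (m (m (S u2) t2) (m y x3)) (m (m x x2) (m y' y3)))"
  have "?L = SL R (\<lambda>x y. SL R (\<lambda>x2 y2. SL R (\<lambda>x' y'. SL R (\<lambda>x3 y3. SL R (\<lambda>t1 t2. SL R (\<lambda>u1 u2. B x y x2 y2 x' y' x3 y3 t1 t2 u1 u2))))))"
  proof (rule SL_cong, rule SL_cong, rule SL_cong, rule SL_cong)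
    fix x y x2 y2 x' y' x3 y3
    have "tril (\<lambda>\<alpha> \<beta> \<gamma>. T (m \<alpha> (m (m y2 x') \<beta>)) (m \<gamma> (m y x3)) (m (m x x2) (m y' y3)))" by (intro ti)
    from Dident[OF this]
    show "SL R (\<lambda>r1 r2. SL (\<Delta> r1) (\<lambda>p q. T (m (S p) (m (m y2 x') q)) (m (S r2) (m y x3)) (m (m x x2) (m y' y3))))
        = SL R (\<lambda>t1 t2. SL R (\<lambda>u1 u2. B x y x2 y2 x' y' x3 y3 t1 t2 u1 u2))"
      by (simp add: B_def)
  qed
  also have "\<dots> = SL R (\<lambda>x2 y2. SL R (\<lambda>x y. SL R (\<lambda>x' y'. SL R (\<lambda>x3 y3. SL R (\<lambda>t1 t2. SL R (\<lambda>u1 u2. B x y x2 y2 x' y' x3 y3 t1 t2 u1 u2))))))"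
    by (rule SL_swap)
  also have "\<dots> = SL R (\<lambda>x2 y2. SL R (\<lambda>x y. SL R (\<lambda>x' y'. SL R (\<lambda>t1 t2. SL R (\<lambda>x3 y3. SL R (\<lambda>u1 u2. B x y x2 y2 x' y' x3 y3 t1 t2 u1 u2))))))"
    by (rule SL_cong, rule SL_cong, rule SL_cong, rule SL_swap)
  also have "\<dots> = SL R (\<lambda>x2 y2. SL R (\<lambda>x y. SL R (\<lambda>t1 t2. SL R (\<lambda>x' y'. SL R (\<lambda>x3 y3. SL R (\<lambda>u1 u2. B x y x2 y2 x' y' x3 y3 t1 t2 u1 u2))))))"
    by (rule SL_cong, rule SL_cong, rule SL_swap)
  also have "\<dots> = SL R (\<lambda>x2 y2. SL R (\<lambda>t1 t2. SL R (\<lambda>x y. SL R (\<lambda>x' y'. SL R (\<lambda>x3 y3. SL R (\<lambda>u1 u2. B x y x2 y2 x' y' x3 y3 t1 t2 u1 u2))))))"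
    by (rule SL_cong, rule SL_swap)
  also have "\<dots> = SL R (\<lambda>x2 y2. SL R (\<lambda>x y. SL R (\<lambda>t1 t2. SL R (\<lambda>x' y'. SL R (\<lambda>x3 y3. SL R (\<lambda>u1 u2. T (m (m y2 t1) (m x' u1)) (m (S u2) (m (m y t2) x3)) (m (m x2 x) (m y' y3))))))))"
  proof -
    define G where "G = (\<lambda>l1 l2 l3. SL R (\<lambda>x' y'. SL R (\<lambda>x3 y3. SL R (\<lambda>u1 u2. T (m l2 (m x' u1)) (m (S u2) (m l3 x3)) (m l1 (m y' y3))))))"
    have tG: "tril G" unfolding G_def by (intro ti)
    from YBE[OF tG] show ?thesis by (simp add: G_def B_def H_assoc)
  qed
  also have "\<dots> = SL R (\<lambda>x2 y2. SL R (\<lambda>x' y'. SL R (\<lambda>x y. SL R (\<lambda>t1 t2. SL R (\<lambda>x3 y3. SL R (\<lambda>u1 u2. T (m (m y2 t1) (m x' u1)) (m (S u2) (m (m y t2) x3)) (m (m x2 x) (m y' y3))))))))"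
  proof (rule SL_cong)
    fix x2 y2
    have "SL R (\<lambda>x y. SL R (\<lambda>t1 t2. SL R (\<lambda>x' y'. SL R (\<lambda>x3 y3. SL R (\<lambda>u1 u2. T (m (m y2 t1) (m x' u1)) (m (S u2) (m (m y t2) x3)) (m (m x2 x) (m y' y3)))))))
      = SL R (\<lambda>x y. SL R (\<lambda>x' y'. SL R (\<lambda>t1 t2. SL R (\<lambda>x3 y3. SL R (\<lambda>u1 u2. T (m (m y2 t1) (m x' u1)) (m (S u2) (m (m y t2) x3)) (m (m x2 x) (m y' y3)))))))"
      by (rule SL_cong, rule SL_swap)
    also have "\<dots> = SL R (\<lambda>x' y'. SL R (\<lambda>x y. SL R (\<lambda>t1 t2. SL R (\<lambda>x3 y3. SL R (\<lambda>u1 u2. T (m (m y2 t1) (m x' u1)) (m (S u2) (m (m y t2) x3)) (m (m x2 x) (m y' y3)))))))"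
      by (rule SL_swap)
    finally show "SL R (\<lambda>x y. SL R (\<lambda>t1 t2. SL R (\<lambda>x' y'. SL R (\<lambda>x3 y3. SL R (\<lambda>u1 u2. T (m (m y2 t1) (m x' u1)) (m (S u2) (m (m y t2) x3)) (m (m x2 x) (m y' y3)))))))
      = SL R (\<lambda>x' y'. SL R (\<lambda>x y. SL R (\<lambda>t1 t2. SL R (\<lambda>x3 y3. SL R (\<lambda>u1 u2. T (m (m y2 t1) (m x' u1)) (m (S u2) (m (m y t2) x3)) (m (m x2 x) (m y' y3)))))))" .
  qed
  also have "\<dots> = SL R (\<lambda>x2 y2. SL R (\<lambda>x' y'. SL R (\<lambda>t1 t2. SL R (\<lambda>x y. SL R (\<lambda>x3 y3. SL R (\<lambda>u1 u2. T (m y2 (m (m x' t1) u1)) (m (S u2) (m (m t2 y) x3)) (m x2 (m (m y' x) y3))))))))"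
  proof (rule SL_cong)
    fix x2 y2
    define G where "G = (\<lambda>l1 l2 l3. SL R (\<lambda>x3 y3. SL R (\<lambda>u1 u2. T (m y2 (m l1 u1)) (m (S u2) (m l3 x3)) (m x2 (m l2 y3)))))"
    have tG: "tril G" unfolding G_def by (intro ti)
    from YBE[OF tG] show "SL R (\<lambda>x' y'. SL R (\<lambda>x y. SL R (\<lambda>t1 t2. SL R (\<lambda>x3 y3. SL R (\<lambda>u1 u2. T (m (m y2 t1) (m x' u1)) (m (S u2) (m (m y t2) x3)) (m (m x2 x) (m y' y3)))))))
      = SL R (\<lambda>x' y'. SL R (\<lambda>t1 t2. SL R (\<lambda>x y. SL R (\<lambda>x3 y3. SL R (\<lambda>u1 u2. T (m y2 (m (m x' t1) u1)) (m (S u2) (m (m t2 y) x3)) (m x2 (m (m y' x) y3)))))))"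
      by (simp add: G_def H_assoc)
  qed
  also have "\<dots> = SL R (\<lambda>x2 y2. SL R (\<lambda>x' y'. SL R (\<lambda>x y. SL R (\<lambda>t1 t2. SL R (\<lambda>x3 y3. SL R (\<lambda>u1 u2. T (m y2 (m (m x' t1) u1)) (m (S u2) (m (m t2 y) x3)) (m x2 (m (m y' x) y3))))))))"
    by (rule SL_cong, rule SL_cong, rule SL_swap)
  also have "\<dots> = SL R (\<lambda>x2 y2. SL R (\<lambda>x' y'. SL R (\<lambda>x y. SL R (\<lambda>x3 y3. SL R (\<lambda>t1 t2. SL R (\<lambda>u1 u2. T (m y2 (m (m x' t1) u1)) (m (S u2) (m (m t2 y) x3)) (m x2 (m (m y' x) y3))))))))"
    by (rule SL_cong, rule SL_cong, rule SL_cong, rule SL_swap)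
  also have "\<dots> = ?R"
  proof (rule SL_cong, rule SL_cong, rule SL_cong, rule SL_cong)
    fix x2 y2 x' y' x y x3 y3
    have "bil (\<lambda>\<alpha> \<beta>. T (m (m y2 x') \<alpha>) (m \<beta> (m y x3)) (m (m x2 y') (m x y3)))" by (intro ti)
    from I1[OF this] show "SL R (\<lambda>t1 t2. SL R (\<lambda>u1 u2. T (m y2 (m (m x' t1) u1)) (m (S u2) (m (m t2 y) x3)) (m x2 (m (m y' x) y3))))
       = T (m y2 x') (m y x3) (m (m x2 y') (m x y3))"
      by (simp add: H_assoc)
  qed
  finally show ?thesis .
qed

end

context QT begin

lemma Qlin: assumes f: "linH F"
  shows "F (Qmap H pr R v) = SL R (\<lambda>x y. SL R (\<lambda>x' y'. pr (m y x') v * F (m x y')))"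
  unfolding Qmap_def
  by (simp add: lin_sum_list[OF f] SL_comp_fun lin_scale[OF f] SL_tmul2 SL_swapmap)

lemma linH_prc: "linH (\<lambda>z. pr z c)" by (intro lin_intros)

lemma Part3: "Qmap H pr R (bmul A pr R a b) = m (Qmap H pr R a) (Qmap H pr R b)"
proof (rule H_ext)
  fix c
  define T where "T = (\<lambda>\<alpha> \<beta> \<gamma>. pr \<alpha> a * pr \<beta> b * pr \<gamma> c)"
  have t: "tril T" unfolding T_def by (intro lin_intros)
  have "pr (Qmap H pr R (bmul A pr R a b)) c = SL R (\<lambda>x y. SL R (\<lambda>x' y'. pr (m y x') (bmul A pr R a b) * pr (m x y') c))"
    by (rule Qlin[OF linH_prc])
  also have "\<dots> = SL R (\<lambda>x y. SL R (\<lambda>x' y'. SL R (\<lambda>r1 r2. SL (\<Delta> r1) (\<lambda>p q. SL (\<Delta> (m y x')) (\<lambda>s t. T (m (S p) (m s q)) (m (S r2) t) (m x y'))))))"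
    by (simp add: CV1 T_def SL_mult_right)
  also have "\<dots> = SL R (\<lambda>x2 y2. SL R (\<lambda>x' y'. SL R (\<lambda>x y. SL R (\<lambda>x3 y3. T (m y2 x') (m y x3) (m (m x2 y') (m x y3))))))"
    using P3_AB[OF t] P3_CD[OF t] by simp
  also have "\<dots> = pr (m (Qmap H pr R a) (Qmap H pr R b)) c"
  proof -
    have l1: "linH (\<lambda>z. pr (m z (Qmap H pr R b)) c)" by (intro lin_intros)
    have l2: "\<And>w. linH (\<lambda>z. pr (m w z) c)" by (intro lin_intros)
    show ?thesis
      apply (subst Qlin[OF l1])
      apply (simp add: Qlin[OF l2] T_def SL_mult_left mult.assoc)
      done
  qed
  finally show "pr (Qmap H pr R (bmul A pr R a b)) c = pr (m (Qmap H pr R a) (Qmap H pr R b)) c" .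
qed

lemma Part1: "Qmap H pr R (a + b) = Qmap H pr R a + Qmap H pr R b"
proof (rule H_ext)
  fix c
  have l: "linH (\<lambda>z. pr z c)" by (intro lin_intros)
  show "pr (Qmap H pr R (a + b)) c = pr (Qmap H pr R a + Qmap H pr R b) c"
    by (simp add: lin_add[OF l] Qlin[OF l] lin_add[OF linA_pr] algebra_simps SL_add[symmetric])
qed

lemma Part2: "Qmap H pr R (scA k a) = sc k (Qmap H pr R a)"
proof (rule H_ext)
  fix c
  have l: "linH (\<lambda>z. pr z c)" by (intro lin_intros)
  show "pr (Qmap H pr R (scA k a)) c = pr (sc k (Qmap H pr R a)) c"
    by (simp add: lin_scale[OF l] Qlin[OF l] pr_scA SL_mult_left mult.assoc)
qed

lemma Part4: "Qmap H pr R e1A = e1"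
proof (rule H_ext)
  fix c
  have "pr (Qmap H pr R e1A) c = SL R (\<lambda>x y. SL R (\<lambda>x' y'. \<epsilon> y * (\<epsilon> x' * pr (m x y') c)))"
    by (simp add: Qlin[OF linH_prc] P_oneA H_epsmul mult.assoc)
  also have "\<dots> = SL R (\<lambda>x y. \<epsilon> y * pr (m x e1) c)"
  proof -
    have "\<And>x. SL R (\<lambda>x' y'. \<epsilon> x' * pr (m x y') c) = pr (m x e1) c" by (rule H1b) (intro lin_intros)
    then show ?thesis by (simp add: SL_mult_left[symmetric])
  qed
  also have "\<dots> = pr e1 c" by (simp, rule H1a[OF linH_prc])
  finally show "pr (Qmap H pr R e1A) c = pr e1 c" .
qed

end

context QT begin

lemma CV2: "pr g (actA A pr R h a b) = SL R (\<lambda>r1 r2. SL R (\<lambda>r1' r2'. SL (\<Delta> h) (\<lambda>h1 h2. pr (m r1 r2') a * pr (m r2 (m (S h1) (m g (m h2 r1')))) b)))"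
  unfolding actA_def Rform_def
  apply (simp add: pr_sum_list pr_scA sum_list_concat_map SL_def[symmetric] P_mulA P_mulH P_S[symmetric] SL_comp_fun)
  apply (simp only: SL_mult_left SL_mult_right SL_swapHA)
  apply (rule SL_cong, rule SL_cong, rule SL_cong, rule SL_cong, rule SL_cong)
  apply (rule trans[OF SL_swap])
  apply (intro SL_cong)
  apply (simp add: ac_simps)
  done

end

context QT begin

abbreviation QS :: "('h \<Rightarrow> 'h \<Rightarrow> 'k) \<Rightarrow> 'k" where
  "QS F \<equiv> SL R (\<lambda>x y. SL R (\<lambda>x' y'. F (m y x') (m x y')))"

lemma QS_swap: "QS (\<lambda>q1 q2. SL L (F q1 q2)) = SL L (\<lambda>u v. QS (\<lambda>q1 q2. F q1 q2 u v))"
  by (rule SL_swap3[symmetric])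

lemma QC: assumes g: "bil G"
  shows "QS (\<lambda>q1 q2. SL (\<Delta> h) (\<lambda>p q. G (m q1 p) (m q2 q))) = QS (\<lambda>q1 q2. SL (\<Delta> h) (\<lambda>p q. G (m p q1) (m q q2)))"
proof -
  note gi = lin_intros linH_bi1[OF g] linH_bi2[OF g]
  have "QS (\<lambda>q1 q2. SL (\<Delta> h) (\<lambda>p q. G (m q1 p) (m q2 q))) = SL R (\<lambda>x y. SL (\<Delta> h) (\<lambda>p q. SL R (\<lambda>x' y'. G (m (m y q) x') (m (m x p) y'))))"
  proof (rule SL_cong)
    fix x y
    have "bil (\<lambda>u v. G (m y u) (m x v))" by (intro gi)
    from R_qcS[OF this, of h] show "SL R (\<lambda>x' y'. SL (\<Delta> h) (\<lambda>p q. G (m (m y x') p) (m (m x y') q))) = SL (\<Delta> h) (\<lambda>p q. SL R (\<lambda>x' y'. G (m (m y q) x') (m (m x p) y')))"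
      by (simp add: H_assoc)
  qed
  also have "\<dots> = SL (\<Delta> h) (\<lambda>p q. SL R (\<lambda>x y. SL R (\<lambda>x' y'. G (m (m p y) x') (m (m q x) y'))))"
  proof -
    have "bil (\<lambda>u v. SL R (\<lambda>x' y'. G (m v x') (m u y')))" by (intro gi)
    from R_qcS[OF this, of h] show ?thesis by (simp add: H_assoc)
  qed
  also have "\<dots> = SL (\<Delta> h) (\<lambda>p q. QS (\<lambda>q1 q2. G (m p q1) (m q q2)))"
    by (simp add: H_assoc)
  also have "\<dots> = QS (\<lambda>q1 q2. SL (\<Delta> h) (\<lambda>p q. G (m p q1) (m q q2)))"
    by (rule SL_swap3)
  finally show ?thesis .
qed

lemma K5: assumes g: "bil G"
  shows "QS (\<lambda>q1 q2. SL (\<Delta> h) (\<lambda>h1 h2. G (m (S h1) (m q1 h2)) q2)) = QS (\<lambda>q1 q2. SL (\<Delta> h) (\<lambda>h1 h2. G q1 (m h1 (m q2 (S h2)))))"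
proof -
  note gi = lin_intros linH_bi1[OF g] linH_bi2[OF g]
  have "QS (\<lambda>q1 q2. SL (\<Delta> h) (\<lambda>h1 h2. G (m (S h1) (m q1 h2)) q2))
      = QS (\<lambda>q1 q2. SL (\<Delta> h) (\<lambda>h1 h2. SL (\<Delta> h2) (\<lambda>c d. SL (\<Delta> d) (\<lambda>e f. G (m (S h1) (m q1 c)) (m q2 (m e (S f)))))))"
  proof -
    have "\<And>q1 q2 h1 h2. G (m (S h1) (m q1 h2)) q2 = SL (\<Delta> h2) (\<lambda>c d. SL (\<Delta> d) (\<lambda>e f. G (m (S h1) (m q1 c)) (m q2 (m e (S f)))))"
    proof -
      fix q1 q2 h1 h2
      have "G (m (S h1) (m q1 h2)) q2 = SL (\<Delta> h2) (\<lambda>c d. \<epsilon> d * G (m (S h1) (m q1 c)) q2)"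
        by (rule B_cou2[symmetric]) (intro gi)
      also have "\<dots> = SL (\<Delta> h2) (\<lambda>c d. SL (\<Delta> d) (\<lambda>e f. G (m (S h1) (m q1 c)) (m q2 (m e (S f)))))"
      proof (rule SL_cong)
        fix c d
        have "SL (\<Delta> d) (\<lambda>e f. G (m (S h1) (m q1 c)) (m q2 (m e (S f)))) = \<epsilon> d * G (m (S h1) (m q1 c)) (m q2 e1)"
          by (rule B_ant2) (intro gi)
        then show "\<epsilon> d * G (m (S h1) (m q1 c)) q2 = SL (\<Delta> d) (\<lambda>e f. G (m (S h1) (m q1 c)) (m q2 (m e (S f))))" by simp
      qed
      finally show "G (m (S h1) (m q1 h2)) q2 = SL (\<Delta> h2) (\<lambda>c d. SL (\<Delta> d) (\<lambda>e f. G (m (S h1) (m q1 c)) (m q2 (m e (S f)))))" .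
    qed
    note eq = this
    show ?thesis by (intro SL_cong eq)
  qed
  also have "\<dots> = QS (\<lambda>q1 q2. SL (\<Delta> h) (\<lambda>h1 h2. SL (\<Delta> h2) (\<lambda>w f. SL (\<Delta> w) (\<lambda>c e. G (m (S h1) (m q1 c)) (m q2 (m e (S f)))))))"
  proof -
    have "\<And>q1 q2 h1 h2. SL (\<Delta> h2) (\<lambda>w f. SL (\<Delta> w) (\<lambda>c e. G (m (S h1) (m q1 c)) (m q2 (m e (S f)))))
       = SL (\<Delta> h2) (\<lambda>c d. SL (\<Delta> d) (\<lambda>e f. G (m (S h1) (m q1 c)) (m q2 (m e (S f)))))"
      by (rule B_coass) (intro gi)
    note eq2 = this
    show ?thesis by (rule SL_cong, rule SL_cong, rule SL_cong, rule eq2[symmetric])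
  qed
  also have "\<dots> = SL (\<Delta> h) (\<lambda>h1 h2. QS (\<lambda>q1 q2. SL (\<Delta> h2) (\<lambda>w f. SL (\<Delta> w) (\<lambda>c e. G (m (S h1) (m q1 c)) (m q2 (m e (S f)))))))"
    by (rule SL_swap3[symmetric])
  also have "\<dots> = SL (\<Delta> h) (\<lambda>h1 h2. SL (\<Delta> h2) (\<lambda>w f. QS (\<lambda>q1 q2. SL (\<Delta> w) (\<lambda>c e. G (m (S h1) (m q1 c)) (m q2 (m e (S f)))))))"
    by (rule SL_cong, rule SL_swap3[symmetric])
  also have "\<dots> = SL (\<Delta> h) (\<lambda>h1 h2. SL (\<Delta> h2) (\<lambda>w f. QS (\<lambda>q1 q2. SL (\<Delta> w) (\<lambda>c e. G (m (S h1) (m c q1)) (m (m e q2) (S f))))))"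
  proof (rule SL_cong, rule SL_cong)
    fix h1 h2 w f
    have "bil (\<lambda>u v. G (m (S h1) u) (m v (S f)))" by (intro gi)
    from QC[OF this, of w] show "QS (\<lambda>q1 q2. SL (\<Delta> w) (\<lambda>c e. G (m (S h1) (m q1 c)) (m q2 (m e (S f))))) = QS (\<lambda>q1 q2. SL (\<Delta> w) (\<lambda>c e. G (m (S h1) (m c q1)) (m (m e q2) (S f))))"
      by (simp add: H_assoc)
  qed
  also have "\<dots> = SL (\<Delta> h) (\<lambda>k f. SL (\<Delta> k) (\<lambda>h1 w. QS (\<lambda>q1 q2. SL (\<Delta> w) (\<lambda>c e. G (m (S h1) (m c q1)) (m (m e q2) (S f))))))"
    by (rule B_coass[symmetric]) (intro gi)
  also have "\<dots> = SL (\<Delta> h) (\<lambda>k f. SL (\<Delta> k) (\<lambda>l e. SL (\<Delta> l) (\<lambda>h1 c. QS (\<lambda>q1 q2. G (m (S h1) (m c q1)) (m (m e q2) (S f))))))"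
  proof (rule SL_cong)
    fix k f
    show "SL (\<Delta> k) (\<lambda>h1 w. QS (\<lambda>q1 q2. SL (\<Delta> w) (\<lambda>c e. G (m (S h1) (m c q1)) (m (m e q2) (S f)))))
        = SL (\<Delta> k) (\<lambda>l e. SL (\<Delta> l) (\<lambda>h1 c. QS (\<lambda>q1 q2. G (m (S h1) (m c q1)) (m (m e q2) (S f)))))"
    proof -
      have "SL (\<Delta> k) (\<lambda>h1 w. QS (\<lambda>q1 q2. SL (\<Delta> w) (\<lambda>c e. G (m (S h1) (m c q1)) (m (m e q2) (S f)))))
          = SL (\<Delta> k) (\<lambda>h1 w. SL (\<Delta> w) (\<lambda>c e. QS (\<lambda>q1 q2. G (m (S h1) (m c q1)) (m (m e q2) (S f)))))"
        by (rule SL_cong, rule SL_swap3[symmetric])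
      also have "\<dots> = SL (\<Delta> k) (\<lambda>l e. SL (\<Delta> l) (\<lambda>h1 c. QS (\<lambda>q1 q2. G (m (S h1) (m c q1)) (m (m e q2) (S f)))))"
        by (rule B_coass[symmetric]) (intro gi)
      finally show ?thesis .
    qed
  qed
  also have "\<dots> = SL (\<Delta> h) (\<lambda>k f. SL (\<Delta> k) (\<lambda>l e. \<epsilon> l * QS (\<lambda>q1 q2. G q1 (m (m e q2) (S f)))))"
  proof (rule SL_cong, rule SL_cong)
    fix k f l e
    have "SL (\<Delta> l) (\<lambda>h1 c. QS (\<lambda>q1 q2. G (m (m (S h1) c) q1) (m (m e q2) (S f)))) = \<epsilon> l * QS (\<lambda>q1 q2. G (m e1 q1) (m (m e q2) (S f)))"
      by (rule B_ant1) (intro gi)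
    then show "SL (\<Delta> l) (\<lambda>h1 c. QS (\<lambda>q1 q2. G (m (S h1) (m c q1)) (m (m e q2) (S f)))) = \<epsilon> l * QS (\<lambda>q1 q2. G q1 (m (m e q2) (S f)))"
      by (simp add: H_assoc)
  qed
  also have "\<dots> = SL (\<Delta> h) (\<lambda>k f. QS (\<lambda>q1 q2. G q1 (m (m k q2) (S f))))"
    by (rule SL_cong, rule B_cou1, intro gi)
  also have "\<dots> = QS (\<lambda>q1 q2. SL (\<Delta> h) (\<lambda>k f. G q1 (m (m k q2) (S f))))"
    by (rule SL_swap3)
  also have "\<dots> = QS (\<lambda>q1 q2. SL (\<Delta> h) (\<lambda>h1 h2. G q1 (m h1 (m q2 (S h2)))))"
    by (simp add: H_assoc)
  finally show ?thesis .
qed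

lemma QD: assumes t: "tril G"
  shows "QS (\<lambda>q1 q2. SL (\<Delta> q2) (\<lambda>s t. G q1 s t)) = SL R (\<lambda>r1 r2. QS (\<lambda>q1 q2. SL R (\<lambda>r1' r2'. G (m r2 (m q1 r1')) (m r1 r2') q2)))"
proof -
  note ti = lin_intros linH_tri1[OF t] linH_tri2[OF t] linH_tri3[OF t]
  have "QS (\<lambda>q1 q2. SL (\<Delta> q2) (\<lambda>s t. G q1 s t)) = SL R (\<lambda>x y. SL R (\<lambda>x' y'. SL (\<Delta> x) (\<lambda>s1 t1. SL (\<Delta> y') (\<lambda>s2 t2. G (m y x') (m s1 s2) (m t1 t2)))))"
  proof -
    have "\<And>x y x' y'. SL (\<Delta> (m x y')) (\<lambda>s t. G (m y x') s t) = SL (\<Delta> x) (\<lambda>s1 t1. SL (\<Delta> y') (\<lambda>s2 t2. G (m y x') (m s1 s2) (m t1 t2)))"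
      by (rule B_copmul) (intro ti)
    then show ?thesis by simp
  qed
  also have "\<dots> = SL R (\<lambda>x y. SL (\<Delta> x) (\<lambda>s1 t1. SL R (\<lambda>x' y'. SL (\<Delta> y') (\<lambda>s2 t2. G (m y x') (m s1 s2) (m t1 t2)))))"
    by (rule SL_cong, rule SL_swap)
  also have "\<dots> = SL R (\<lambda>x y. SL R (\<lambda>x2 y2. SL R (\<lambda>x' y'. SL (\<Delta> y') (\<lambda>s2 t2. G (m (m y y2) x') (m x s2) (m x2 t2)))))"
    by (rule R_coplS) (intro ti)
  also have "\<dots> = SL R (\<lambda>x y. SL R (\<lambda>x2 y2. SL R (\<lambda>x' y'. SL R (\<lambda>x3 y3. G (m (m y y2) (m x' x3)) (m x y3) (m x2 y')))))"
  proof (rule SL_cong, rule SL_cong)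
    fix x y x2 y2
    show "SL R (\<lambda>x' y'. SL (\<Delta> y') (\<lambda>s2 t2. G (m (m y y2) x') (m x s2) (m x2 t2))) = SL R (\<lambda>x' y'. SL R (\<lambda>x3 y3. G (m (m y y2) (m x' x3)) (m x y3) (m x2 y')))"
      by (rule R_coprS) (intro ti)
  qed
  also have "\<dots> = SL R (\<lambda>r1 r2. QS (\<lambda>q1 q2. SL R (\<lambda>r1' r2'. G (m r2 (m q1 r1')) (m r1 r2') q2)))"
    by (simp add: H_assoc)
  finally show ?thesis .
qed

end

context QT begin

lemma actH_pr: "pr (actH H pr h a \<phi>) c = SL (\<Delta> \<phi>) (\<lambda>p1 p2. SL (\<Delta> h) (\<lambda>h1 h2. pr p1 a * pr (m (m h1 p2) (S h2)) c))"
  unfolding actH_def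
  by (simp add: lin_sum_list[OF linH_prc] sum_list_concat_map SL_def[symmetric] SL_comp_fun lin_scale[OF linH_prc])

lemma Part5: "Qmap H pr R (actA A pr R h a b) = actH H pr h a (Qmap H pr R b)"
proof (rule H_ext)
  fix c
  define Gk where "Gk = (\<lambda>\<beta> \<gamma>. SL R (\<lambda>r1 r2. SL R (\<lambda>r1' r2'. pr (m r1 r2') a * pr (m r2 (m \<beta> r1')) b * pr \<gamma> c)))"
  define Gq where "Gq = (\<lambda>\<beta> \<alpha> \<gamma>. SL (\<Delta> h) (\<lambda>h1 h2. pr \<alpha> a * pr \<beta> b * pr (m h1 (m \<gamma> (S h2))) c))"
  have bGk: "bil Gk" unfolding Gk_def by (intro lin_intros)
  have tGq: "tril Gq" unfolding Gq_def by (intro lin_intros)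
  have "pr (Qmap H pr R (actA A pr R h a b)) c = QS (\<lambda>q1 q2. pr q1 (actA A pr R h a b) * pr q2 c)"
    by (rule Qlin[OF linH_prc])
  also have "\<dots> = QS (\<lambda>q1 q2. SL (\<Delta> h) (\<lambda>h1 h2. Gk (m (S h1) (m q1 h2)) q2))"
  proof (rule SL_cong, rule SL_cong)
    fix x y x' y'
    have "pr (m y x') (actA A pr R h a b) * pr (m x y') c
       = SL R (\<lambda>r1 r2. SL R (\<lambda>r1' r2'. SL (\<Delta> h) (\<lambda>h1 h2. pr (m r1 r2') a * pr (m r2 (m (S h1) (m (m y x') (m h2 r1')))) b * pr (m x y') c)))"
      by (simp add: CV2 SL_mult_right)
    also have "\<dots> = SL (\<Delta> h) (\<lambda>h1 h2. SL R (\<lambda>r1 r2. SL R (\<lambda>r1' r2'. pr (m r1 r2') a * pr (m r2 (m (S h1) (m (m y x') (m h2 r1')))) b * pr (m x y') c)))"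
      by (rule SL_swap3[symmetric])
    also have "\<dots> = SL (\<Delta> h) (\<lambda>h1 h2. Gk (m (S h1) (m (m y x') h2)) (m x y'))"
      by (simp add: Gk_def H_assoc)
    finally show "pr (m y x') (actA A pr R h a b) * pr (m x y') c = SL (\<Delta> h) (\<lambda>h1 h2. Gk (m (S h1) (m (m y x') h2)) (m x y'))" .
  qed
  also have "\<dots> = QS (\<lambda>q1 q2. SL (\<Delta> h) (\<lambda>h1 h2. Gk q1 (m h1 (m q2 (S h2)))))"
    by (rule K5[OF bGk])
  also have "\<dots> = QS (\<lambda>q1 q2. SL R (\<lambda>r1 r2. SL R (\<lambda>r1' r2'. Gq (m r2 (m q1 r1')) (m r1 r2') q2)))"
  proof (rule SL_cong, rule SL_cong)
    fix x y x' y'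
    show "SL (\<Delta> h) (\<lambda>h1 h2. Gk (m y x') (m h1 (m (m x y') (S h2)))) = SL R (\<lambda>r1 r2. SL R (\<lambda>r1' r2'. Gq (m r2 (m (m y x') r1')) (m r1 r2') (m x y')))"
      unfolding Gk_def Gq_def
      apply (rule trans[OF SL_swap3])
      apply (simp add: H_assoc ac_simps)
      done
  qed
  also have "\<dots> = SL R (\<lambda>r1 r2. QS (\<lambda>q1 q2. SL R (\<lambda>r1' r2'. Gq (m r2 (m q1 r1')) (m r1 r2') q2)))"
    by (rule SL_swap3[symmetric])
  also have "\<dots> = QS (\<lambda>q1 q2. SL (\<Delta> q2) (\<lambda>s t. Gq q1 s t))"
    by (rule QD[OF tGq, symmetric])
  also have "\<dots> = pr (actH H pr h a (Qmap H pr R b)) c"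
  proof -
    have l: "linH (\<lambda>\<phi>. SL (\<Delta> \<phi>) (\<lambda>p1 p2. SL (\<Delta> h) (\<lambda>h1 h2. pr p1 a * pr (m (m h1 p2) (S h2)) c)))"
      by (intro lin_intros)
    show ?thesis
      apply (subst actH_pr)
      apply (subst Qlin[OF l])
      apply (simp add: Gq_def SL_mult_left H_assoc ac_simps)
      done
  qed
  finally show "pr (Qmap H pr R (actA A pr R h a b)) c = pr (actH H pr h a (Qmap H pr R b)) c" .
qed

end

theorem lemma2p1:
  fixes H :: "('k::field, 'h::ab_group_add) hopf"
    and A :: "('k, 'a::ab_group_add) hopf"
    and pr :: "'h \<Rightarrow> 'a \<Rightarrow> 'k"
    and R :: "('h \<times> 'h) list"
  assumes "hopf_algebra H"
    and "hopf_algebra A"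
    and "hopf_pairing H A pr"
    and "quasitriangular H R"
  shows "(\<forall>a b. Qmap H pr R (a + b) = Qmap H pr R a + Qmap H pr R b)
       \<and> (\<forall>c a. Qmap H pr R (hscl A c a) = hscl H c (Qmap H pr R a))
       \<and> (\<forall>a b. Qmap H pr R (bmul A pr R a b) = hmul H (Qmap H pr R a) (Qmap H pr R b))
       \<and> Qmap H pr R (hone A) = hone H
       \<and> (\<forall>h a b. Qmap H pr R (actA A pr R h a b) = actH H pr h a (Qmap H pr R b))"
proof -
  interpret QT H A pr R using assms by (rule QT.intro)
  show ?thesis using Part1 Part2 Part3 Part4 Part5 by blast
qed

end
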